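(* Let $N\geqslant 2$, $1<p<N$, $p<q<p+\frac{p^2}{N}$, $a,\mu>0$ with $\mu a^{q(1-\gamma_{q})}<\alpha(N,p,q)$, and let $R_0$ be as below. Then \[m^{+}(a,\mu)=\inf_{u\in A_{R_{0}}}E_{\mu}(u)<0<m^{-}(a,\mu),\] where $A_{R_0}=\{u\in S_a:\lVert\nabla u\rVert_p\leqslant R_0\}$.
   Context: $p^*=\frac{Np}{N-p}$, $\gamma_{q}=\frac{N(q-p)}{pq}$, $S_{a}=\{u\in W^{1,p}(\mathbb{R}^N):\lVert u\rVert_{p}^p=a^p\}$. $E_{\mu}(u)=\frac1p\lVert\nabla u\rVert_p^p-\frac{\mu}{q}\lVert u\rVert_q^q-\frac{1}{p^*}\lVert u\rVert_{p^*}^{p^*}$, $P_\mu(u)=\lVert\nabla u\rVert_p^p-\mu\gamma_q\lVert u\rVert_q^q-\lVert u\rVert_{p^*}^{p^*}$, $\mathcal{P}_{a,\mu}^{\pm}=\{u\in S_a:P_\mu(u)=0,\ \pm(p\lVert\nabla u\rVert_p^p-\mu q\gamma_q^2\lVert u\rVert_q^q-p^*\lVert u\rVert_{p^*}^{p^*})>0\}$, $m^{\pm}(a,\mu)=\inf_{\mathcal{P}^{\pm}_{a,\mu}}E_\mu$. $S$, $C_{N,p,q}$ are the optimal Sobolev and Gagliardo–Nirenberg ($\lVert u\rVert_q^q\leqslant C_{N,p,q}\lVert\nabla u\rVert_p^{q\gamma_q}\lVert u\rVert_p^{q(1-\gamma_q)}$) constants; $\alpha(N,p,q)=\min\{C',C''\}$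 with $C'=\Big(\frac{p^*S^{p^*/p}(p-q\gamma_{q})}{p(p^*-q\gamma_{q})}\Big)^{\frac{p-q\gamma_{q}}{p^*-p}}\frac{q(p^*-p)}{pC_{N,p,q}(p^*-q\gamma_{q})}$, $C''=\frac{pp^*}{N\gamma_{q}C_{N,p,q}(p^*-p)}\Big(\frac{q\gamma_{q}S^{N/p}}{p-q\gamma_{q}}\Big)^{\frac{p-q\gamma_{q}}{p}}$. $R_0$ is the smaller of the two positive zeros $R_0<R_1$ of $h(t)=\frac1pt^p-\frac{\mu}{q}C_{N,p,q}a^{q(1-\gamma_q)}t^{q\gamma_q}-\frac{1}{p^*S^{p^*/p}}t^{p^*}$. *)

theory Defs
  imports "HOL-Analysis.Analysis"
begin

definition partial_deriv :: "'n::finite \<Rightarrow> (real^'n \<Rightarrow> real) \<Rightarrow> real^'n \<Rightarrow> real" where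
  "partial_deriv i f x = deriv (\<lambda>t. f (x + t *\<^sub>R axis i 1)) 0"

primrec iter_partial :: "'n::finite list \<Rightarrow> (real^'n \<Rightarrow> real) \<Rightarrow> real^'n \<Rightarrow> real" where
  "iter_partial [] f = f"
| "iter_partial (i # is) f = partial_deriv i (iter_partial is f)"

definition smooth_fun :: "(real^'n::finite \<Rightarrow> real) \<Rightarrow> bool" where
  "smooth_fun f \<longleftrightarrow> (\<forall>is x. iter_partial is f differentiable (at x))"

definition test_fun :: "(real^'n::finite \<Rightarrow> real) \<Rightarrow> bool" where
  "test_fun f \<longleftrightarrow> smooth_fun f \<and> compact (closure {x. f x \<noteq> 0})"

definition in_Lp :: "real \<Rightarrow> (real^'n::finite \<Rightarrow> real) \<Rightarrow> bool" where
  "in_Lp p u \<longleftrightarrow> u \<in> borel_measurable lborel \<and> integrable lborel (\<lambda>x. \<bar>u x\<bar> powr p)"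

definition Lnorm :: "real \<Rightarrow> (real^'n::finite \<Rightarrow> real) \<Rightarrow> real" where
  "Lnorm p u = (\<integral>x. \<bar>u x\<bar> powr p \<partial>lborel) powr (1 / p)"

definition weak_gradient :: "(real^'n::finite \<Rightarrow> real) \<Rightarrow> (real^'n \<Rightarrow> real^'n) \<Rightarrow> bool" where
  "weak_gradient u g \<longleftrightarrow>
     (\<forall>\<phi> i. test_fun \<phi> \<longrightarrow>
        integrable lborel (\<lambda>x. u x * partial_deriv i \<phi> x) \<and>
        integrable lborel (\<lambda>x. g x $ i * \<phi> x) \<and>
        (\<integral>x. u x * partial_deriv i \<phi> x \<partial>lborel) = - (\<integral>x. g x $ i * \<phi> x \<partial>lborel))"

definition W1p :: "real \<Rightarrow> (real^'n::finite \<Rightarrow> real) \<Rightarrow> bool" where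
  "W1p p u \<longleftrightarrow> in_Lp p u \<and>
     (\<exists>g. weak_gradient u g \<and> g \<in> borel_measurable lborel \<and>
          integrable lborel (\<lambda>x. norm (g x) powr p))"

definition grad :: "real \<Rightarrow> (real^'n::finite \<Rightarrow> real) \<Rightarrow> real^'n \<Rightarrow> real^'n" where
  "grad p u = (SOME g. weak_gradient u g \<and> g \<in> borel_measurable lborel \<and>
                       integrable lborel (\<lambda>x. norm (g x) powr p))"

definition gnorm :: "real \<Rightarrow> (real^'n::finite \<Rightarrow> real) \<Rightarrow> real" where
  "gnorm p u = (\<integral>x. norm (grad p u x) powr p \<partial>lborel) powr (1 / p)"

definition crit_exp :: "nat \<Rightarrow> real \<Rightarrow> real" where
  "crit_exp N p = real N * p / (real N - p)"

definition gamma_q :: "nat \<Rightarrow> real \<Rightarrow> real \<Rightarrow> real" where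
  "gamma_q N p q = real N * (q - p) / (p * q)"

definition sobolev_const :: "'n::finite itself \<Rightarrow> real \<Rightarrow> real" where
  "sobolev_const (_ :: 'n itself) p =
     Inf {gnorm p u powr p / Lnorm (crit_exp CARD('n) p) u powr p
          | u :: real^'n \<Rightarrow> real. W1p p u \<and> \<not> (AE x in lborel. u x = 0)}"

definition GN_const :: "'n::finite itself \<Rightarrow> real \<Rightarrow> real \<Rightarrow> real" where
  "GN_const (_ :: 'n itself) p q =
     Sup {Lnorm q u powr q /
            (gnorm p u powr (q * gamma_q CARD('n) p q) *
             Lnorm p u powr (q * (1 - gamma_q CARD('n) p q)))
          | u :: real^'n \<Rightarrow> real. W1p p u \<and> \<not> (AE x in lborel. u x = 0)}"

definition alpha_const :: "'n::finite itself \<Rightarrow> real \<Rightarrow> real \<Rightarrow> real" where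
  "alpha_const T p q =
    (let N = CARD('n); ps = crit_exp N p; g = gamma_q N p q;
         S = sobolev_const T p; C = GN_const T p q;
         C1 = (ps * S powr (ps / p) * (p - q * g) / (p * (ps - q * g))) powr ((p - q * g) / (ps - p))
              * (q * (ps - p)) / (p * C * (ps - q * g));
         C2 = (p * ps) / (real N * g * C * (ps - p))
              * (q * g * S powr (real N / p) / (p - q * g)) powr ((p - q * g) / p)
     in min C1 C2)"

definition Sa :: "'n::finite itself \<Rightarrow> real \<Rightarrow> real \<Rightarrow> (real^'n \<Rightarrow> real) set" where
  "Sa _ p a = {u. W1p p u \<and> Lnorm p u powr p = a powr p}"

definition energy :: "'n::finite itself \<Rightarrow> real \<Rightarrow> real \<Rightarrow> real \<Rightarrow> (real^'n \<Rightarrow> real) \<Rightarrow> real" where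
  "energy _ p q \<mu> u = (let ps = crit_exp CARD('n) p in
     1 / p * gnorm p u powr p - \<mu> / q * Lnorm q u powr q - 1 / ps * Lnorm ps u powr ps)"

definition pohozaev :: "'n::finite itself \<Rightarrow> real \<Rightarrow> real \<Rightarrow> real \<Rightarrow> (real^'n \<Rightarrow> real) \<Rightarrow> real" where
  "pohozaev _ p q \<mu> u = (let ps = crit_exp CARD('n) p in
     gnorm p u powr p - \<mu> * gamma_q CARD('n) p q * Lnorm q u powr q - Lnorm ps u powr ps)"

definition pohozaev_second :: "'n::finite itself \<Rightarrow> real \<Rightarrow> real \<Rightarrow> real \<Rightarrow> (real^'n \<Rightarrow> real) \<Rightarrow> real" where
  "pohozaev_second _ p q \<mu> u = (let ps = crit_exp CARD('n) p in
     p * gnorm p u powr p - \<mu> * q * (gamma_q CARD('n) p q)\<^sup>2 * Lnorm q u powr q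
     - ps * Lnorm ps u powr ps)"

definition P_plus :: "'n::finite itself \<Rightarrow> real \<Rightarrow> real \<Rightarrow> real \<Rightarrow> real \<Rightarrow> (real^'n \<Rightarrow> real) set" where
  "P_plus T p q a \<mu> = {u \<in> Sa T p a. pohozaev T p q \<mu> u = 0 \<and> pohozaev_second T p q \<mu> u > 0}"

definition P_minus :: "'n::finite itself \<Rightarrow> real \<Rightarrow> real \<Rightarrow> real \<Rightarrow> real \<Rightarrow> (real^'n \<Rightarrow> real) set" where
  "P_minus T p q a \<mu> = {u \<in> Sa T p a. pohozaev T p q \<mu> u = 0 \<and> pohozaev_second T p q \<mu> u < 0}"

definition m_plus :: "'n::finite itself \<Rightarrow> real \<Rightarrow> real \<Rightarrow> real \<Rightarrow> real \<Rightarrow> real" where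
  "m_plus T p q a \<mu> = Inf (energy T p q \<mu> ` P_plus T p q a \<mu>)"

definition m_minus :: "'n::finite itself \<Rightarrow> real \<Rightarrow> real \<Rightarrow> real \<Rightarrow> real \<Rightarrow> real" where
  "m_minus T p q a \<mu> = Inf (energy T p q \<mu> ` P_minus T p q a \<mu>)"

definition h_fun :: "'n::finite itself \<Rightarrow> real \<Rightarrow> real \<Rightarrow> real \<Rightarrow> real \<Rightarrow> real \<Rightarrow> real" where
  "h_fun T p q a \<mu> t = (let N = CARD('n); ps = crit_exp N p; g = gamma_q N p q in
     1 / p * t powr p - \<mu> / q * GN_const T p q * a powr (q * (1 - g)) * t powr (q * g)
     - 1 / (ps * sobolev_const T p powr (ps / p)) * t powr ps)"

definition R0 :: "'n::finite itself \<Rightarrow> real \<Rightarrow> real \<Rightarrow> real \<Rightarrow> real \<Rightarrow> real" where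
  "R0 T p q a \<mu> = Inf {t. t > 0 \<and> h_fun T p q a \<mu> t = 0}"

definition A_R :: "'n::finite itself \<Rightarrow> real \<Rightarrow> real \<Rightarrow> real \<Rightarrow> (real^'n \<Rightarrow> real) set" where
  "A_R T p a R = {u \<in> Sa T p a. gnorm p u \<le> R}"

end

theory Submission
  imports Defs "HOL-Computational_Algebra.Polynomial"
begin


definition fk :: "real \<Rightarrow> real \<Rightarrow> real \<Rightarrow> real \<Rightarrow> real \<Rightarrow> real \<Rightarrow> real" where
  "fk a1 a2 a3 A D s = A * s powr (a1 - a2) - D * s powr (a3 - a2)"

definition fPhi :: "real \<Rightarrow> real \<Rightarrow> real \<Rightarrow> real \<Rightarrow> real \<Rightarrow> real \<Rightarrow> real \<Rightarrow> real" where
  "fPhi a1 a2 a3 A M D s = A / a1 * s powr a1 - M / a2 * s powr a2 - D / a3 * s powr a3"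

definition fs0 :: "real \<Rightarrow> real \<Rightarrow> real \<Rightarrow> real \<Rightarrow> real \<Rightarrow> real" where
  "fs0 a1 a2 a3 A D = ((a1 - a2) * A / ((a3 - a2) * D)) powr (1 / (a3 - a1))"

locale fib =
  fixes a1 a2 a3 A M D :: real
  assumes a2: "0 < a2" and a12: "a2 < a1" and a13: "a1 < a3"
    and A: "0 < A" and D: "0 < D" and M: "0 \<le> M"
begin

abbreviation k :: "real \<Rightarrow> real" where
  "k \<equiv> fk a1 a2 a3 A D"

abbreviation Phi :: "real \<Rightarrow> real" where
  "Phi \<equiv> fPhi a1 a2 a3 A M D"

abbreviation s0 :: real where
  "s0 \<equiv> fs0 a1 a2 a3 A D"

lemma k_def: "k s = A * s powr (a1 - a2) - D * s powr (a3 - a2)" by (simp add: fk_def)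
lemma Phi_def: "Phi s = A / a1 * s powr a1 - M / a2 * s powr a2 - D / a3 * s powr a3" by (simp add: fPhi_def)
lemma s0_def: "s0 = ((a1 - a2) * A / ((a3 - a2) * D)) powr (1 / (a3 - a1))" by (simp add: fs0_def)

lemma s0_pos: "0 < s0"
  unfolding s0_def using a2 a12 a13 A D by simp

lemma k0: "k 0 = 0" unfolding k_def using a12 a13 by simp
lemma Phi0: "Phi 0 = 0" unfolding Phi_def using a2 a12 a13 by simp

lemma k_cont: "continuous_on {0..} k"
  unfolding fk_def[abs_def] using a12 a13
  by (intro continuous_intros continuous_on_powr') auto

lemma Phi_cont: "continuous_on {0..} Phi"
  unfolding fPhi_def[abs_def] using a2 a12 a13
  by (intro continuous_intros continuous_on_powr') auto

lemma k_deriv: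
  assumes "0 < s"
  shows "(k has_real_derivative
     (s powr (a1 - a2 - 1) * ((a1 - a2) * A - (a3 - a2) * D * s powr (a3 - a1)))) (at s)"
proof -
  have d: "(k has_real_derivative A * ((a1 - a2) * s powr (a1 - a2 - 1)) - D * ((a3 - a2) * s powr (a3 - a2 - 1))) (at s)"
    unfolding fk_def[abs_def]
    by (intro derivative_eq_intros has_real_derivative_powr assms) auto
  have e: "s powr (a3 - a2 - 1) = s powr (a1 - a2 - 1) * s powr (a3 - a1)"
    using assms by (simp add: powr_add[symmetric] algebra_simps)
  have eq: "A * ((a1 - a2) * s powr (a1 - a2 - 1)) - D * ((a3 - a2) * s powr (a3 - a2 - 1))
     = s powr (a1 - a2 - 1) * ((a1 - a2) * A - (a3 - a2) * D * s powr (a3 - a1))"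
    unfolding e by (simp add: algebra_simps)
  show ?thesis by (subst eq[symmetric]) (rule d)
qed

lemma Phi_deriv:
  assumes "0 < s"
  shows "(Phi has_real_derivative (s powr (a2 - 1) * (k s - M))) (at s)"
proof -
  have "(Phi has_real_derivative A / a1 * (a1 * s powr (a1 - 1)) - M / a2 * (a2 * s powr (a2 - 1)) - D / a3 * (a3 * s powr (a3 - 1))) (at s)"
    unfolding fPhi_def[abs_def]
    by (intro derivative_eq_intros has_real_derivative_powr assms) auto
  moreover have "s powr (a1 - 1) = s powr (a2 - 1) * s powr (a1 - a2)"
    "s powr (a3 - 1) = s powr (a2 - 1) * s powr (a3 - a2)"
    using assms by (simp_all add: powr_add[symmetric])
  ultimately show ?thesis using a2 a12 a13 by (simp add: k_def algebra_simps)
qed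

lemma kp_pos_iff:
  assumes "0 < s"
  shows "(a3 - a2) * D * s powr (a3 - a1) < (a1 - a2) * A \<longleftrightarrow> s < s0"
proof -
  have e: "0 < a3 - a1" using a13 by simp
  have c: "0 < (a1 - a2) * A / ((a3 - a2) * D)" using a12 a13 A D by simp
  have "s0 powr (a3 - a1) = (a1 - a2) * A / ((a3 - a2) * D)"
    unfolding s0_def using e c a12 a13 A D by (simp add: powr_powr abs_of_pos)
  moreover have "s < s0 \<longleftrightarrow> s powr (a3 - a1) < s0 powr (a3 - a1)"
    using assms s0_pos e by (metis less_eq_real_def not_less powr_less_mono2 powr_mono2)
  ultimately show ?thesis using a12 a13 D
    by (simp add: pos_less_divide_eq mult.commute mult.left_commute)
qed

lemma kp_neg_iff:
  assumes "0 < s"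
  shows "(a1 - a2) * A < (a3 - a2) * D * s powr (a3 - a1) \<longleftrightarrow> s0 < s"
proof -
  have e: "0 < a3 - a1" using a13 by simp
  have c: "0 < (a1 - a2) * A / ((a3 - a2) * D)" using a12 a13 A D by simp
  have "s0 powr (a3 - a1) = (a1 - a2) * A / ((a3 - a2) * D)"
    unfolding s0_def using e c a12 a13 A D by (simp add: powr_powr abs_of_pos)
  moreover have "s0 < s \<longleftrightarrow> s0 powr (a3 - a1) < s powr (a3 - a1)"
    using assms s0_pos e by (metis less_eq_real_def not_less powr_less_mono2 powr_mono2)
  ultimately show ?thesis using a12 a13 D
    by (simp add: divide_less_eq mult.commute mult.left_commute)
qed

lemma k_up:
  assumes "0 \<le> x" "x < y" "y \<le> s0"
  shows "k x < k y"
proof (rule DERIV_pos_imp_increasing_open[OF assms(2)])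
  fix z assume z: "x < z" "z < y"
  then have z0: "0 < z" using assms by simp
  have "z < s0" using z assms by simp
  then have "0 < (a1 - a2) * A - (a3 - a2) * D * z powr (a3 - a1)"
    using kp_pos_iff[OF z0] by simp
  then show "\<exists>y. DERIV k z :> y \<and> 0 < y"
    using k_deriv[OF z0] z0 by (intro exI[of _ "z powr (a1 - a2 - 1) * ((a1 - a2) * A - (a3 - a2) * D * z powr (a3 - a1))"]) simp
next
  show "continuous_on {x..y} k" by (rule continuous_on_subset[OF k_cont]) (use assms in auto)
qed

lemma k_down:
  assumes "s0 \<le> x" "x < y"
  shows "k y < k x"
proof -
  have "- k x < - k y"
  proof (rule DERIV_pos_imp_increasing_open[OF assms(2)])
    fix z assume z: "x < z" "z < y"
    then have z0: "0 < z" using assms s0_pos by simp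
    have "s0 < z" using z assms by simp
    then have "0 < (a3 - a2) * D * z powr (a3 - a1) - (a1 - a2) * A"
      using kp_neg_iff[OF z0] by simp
    then show "\<exists>y. DERIV (\<lambda>x. - k x) z :> y \<and> 0 < y"
      using DERIV_minus[OF k_deriv[OF z0]] z0
      by (intro exI[of _ "- (z powr (a1 - a2 - 1) * ((a1 - a2) * A - (a3 - a2) * D * z powr (a3 - a1)))"])
         (auto simp: mult_pos_neg)
  next
    show "continuous_on {x..y} (\<lambda>x. - k x)" using k_cont assms s0_pos
      by (intro continuous_intros) (rule continuous_on_subset[OF k_cont], auto)
  qed
  then show ?thesis by simp
qed

lemma k_le_s0: "0 \<le> x \<Longrightarrow> k x \<le> k s0"
  using k_up[of x s0] k_down[of s0 x] by (cases x s0 rule: linorder_cases) auto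

lemma Phi_up:
  assumes "0 \<le> x" "x \<le> y" "\<And>z. x < z \<Longrightarrow> z < y \<Longrightarrow> M \<le> k z"
  shows "Phi x \<le> Phi y"
proof (rule DERIV_nonneg_imp_increasing_open[OF assms(2)])
  fix z assume z: "x < z" "z < y"
  then have z0: "0 < z" using assms by simp
  show "\<exists>y. DERIV Phi z :> y \<and> 0 \<le> y"
    using Phi_deriv[OF z0] assms(3)[OF z] z0 by (intro exI[of _ "z powr (a2 - 1) * (k z - M)"]) simp
next
  show "continuous_on {x..y} Phi" by (rule continuous_on_subset[OF Phi_cont]) (use assms in auto)
qed

lemma Phi_down:
  assumes "0 \<le> x" "x \<le> y" "\<And>z. x < z \<Longrightarrow> z < y \<Longrightarrow> k z \<le> M"
  shows "Phi y \<le> Phi x"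
proof (rule DERIV_nonpos_imp_decreasing_open[OF assms(2)])
  fix z assume z: "x < z" "z < y"
  then have z0: "0 < z" using assms by simp
  show "\<exists>y. DERIV Phi z :> y \<and> y \<le> 0"
    using Phi_deriv[OF z0] assms(3)[OF z] z0
    by (intro exI[of _ "z powr (a2 - 1) * (k z - M)"]) (simp add: mult_nonneg_nonpos)
next
  show "continuous_on {x..y} Phi" by (rule continuous_on_subset[OF Phi_cont]) (use assms in auto)
qed

lemma Phi_sdown:
  assumes "0 \<le> x" "x < y" "\<And>z. x < z \<Longrightarrow> z < y \<Longrightarrow> k z < M"
  shows "Phi y < Phi x"
proof (rule DERIV_neg_imp_decreasing_open[OF assms(2)])
  fix z assume z: "x < z" "z < y"
  then have z0: "0 < z" using assms by simp
  show "\<exists>y. DERIV Phi z :> y \<and> y < 0"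
    using Phi_deriv[OF z0] assms(3)[OF z] z0
    by (intro exI[of _ "z powr (a2 - 1) * (k z - M)"]) (simp add: mult_pos_neg)
next
  show "continuous_on {x..y} Phi" by (rule continuous_on_subset[OF Phi_cont]) (use assms in auto)
qed


lemma L_plus:
  assumes "k 1 = M" "1 < s0" "0 < s" "s \<le> 1"
  shows "Phi s < 0"
proof -
  have "Phi s < Phi 0"
  proof (rule Phi_sdown)
    fix z assume z: "0 < z" "z < s"
    then have "k z < k 1" using assms by (intro k_up) auto
    then show "k z < M" using assms by simp
  qed (use assms in auto)
  then show ?thesis using Phi0 by simp
qed

lemma L_minus:
  assumes "k 1 = M" "s0 < 1" "0 < s"
  shows "Phi s \<le> max 0 (Phi 1)"
proof -
  have mid: "Phi x \<le> Phi 1" if "s0 \<le> x" "x \<le> 1" for x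
  proof (rule Phi_up)
    fix z assume z: "x < z" "z < 1"
    then have "k 1 < k z" using that by (intro k_down) auto
    then show "M \<le> k z" using assms by simp
  qed (use that s0_pos in auto)
  show ?thesis
  proof (cases "1 \<le> s")
    case True
    have "Phi s \<le> Phi 1"
    proof (rule Phi_down)
      fix z assume z: "1 < z" "z < s"
      then have "k z < k 1" using assms by (intro k_down) auto
      then show "k z \<le> M" using assms by simp
    qed (use True in auto)
    then show ?thesis by simp
  next
    case False
    show ?thesis
    proof (cases "s0 \<le> s")
      case True
      then show ?thesis using mid[of s] False by simp
    next
      case s_lt: False
      show ?thesis
      proof (cases "k s \<le> M")
        case True
        have "Phi s \<le> Phi 0"
        proof (rule Phi_down)
          fix z assume z: "0 < z" "z < s"
          then have "k z < k s" using s_lt by (intro k_up) auto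
          then show "k z \<le> M" using True by simp
        qed (use assms in auto)
        then show ?thesis using Phi0 by simp
      next
        case False
        have "Phi s \<le> Phi s0"
        proof (rule Phi_up)
          fix z assume z: "s < z" "z < s0"
          then have "k s < k z" using assms by (intro k_up) auto
          then show "M \<le> k z" using False by simp
        qed (use assms s_lt in auto)
        also have "\<dots> \<le> Phi 1" using mid[of s0] assms by simp
        finally show ?thesis by simp
      qed
    qed
  qed
qed

lemma M_lt_ks0:
  assumes "0 \<le> t" "0 < Phi t"
  shows "M < k s0"
proof (rule ccontr)
  assume "\<not> M < k s0"
  have "Phi t \<le> Phi 0"
  proof (rule Phi_down)
    fix z assume "0 < z" "z < t"
    then have "k z \<le> k s0" using k_le_s0 by simp
    then show "k z \<le> M" using \<open>\<not> M < k s0\<close> by simp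
  qed (use assms in auto)
  then show False using Phi0 assms by simp
qed

lemma L_s1:
  assumes "0 < M" "0 \<le> t" "0 < Phi t"
  shows "\<exists>s1. 0 < s1 \<and> s1 < s0 \<and> k s1 = M"
proof -
  have lt: "M < k s0" using M_lt_ks0 assms by blast
  have "\<exists>x. 0 \<le> x \<and> x \<le> s0 \<and> k x = M"
    using lt assms s0_pos k0
    by (intro IVT') (auto intro: continuous_on_subset[OF k_cont])
  then obtain x where x: "0 \<le> x" "x \<le> s0" "k x = M" by blast
  have "x \<noteq> 0" using x k0 assms by auto
  moreover have "x \<noteq> s0" using x lt by auto
  ultimately show ?thesis using x by (intro exI[of _ x]) auto
qed

lemma L_s2:
  assumes "0 < M" "0 \<le> t" "0 < Phi t"
  shows "\<exists>s2. s0 < s2 \<and> k s2 = M"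
proof -
  have lt: "M < k s0" using M_lt_ks0 assms by blast
  define T where "T = s0 + (A / D) powr (1 / (a3 - a1)) + 1"
  have "0 \<le> (A / D) powr (1 / (a3 - a1))" by simp
  then have T0: "0 < T" "s0 \<le> T" unfolding T_def using s0_pos by linarith+
  have "(A / D) powr (1 / (a3 - a1)) < T" unfolding T_def using s0_pos by simp
  then have "((A / D) powr (1 / (a3 - a1))) powr (a3 - a1) < T powr (a3 - a1)"
    using a13 by (intro powr_less_mono2) auto
  then have "A / D < T powr (a3 - a1)"
    using a13 A D by (simp add: powr_powr)
  then have "A < D * T powr (a3 - a1)" using D by (simp add: divide_less_eq mult.commute)
  then have "A * T powr (a1 - a2) < D * T powr (a3 - a1) * T powr (a1 - a2)"
    using T0 by simp
  also have "D * T powr (a3 - a1) * T powr (a1 - a2) = D * T powr (a3 - a2)"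
    using T0 by (simp add: powr_add[symmetric])
  finally have "k T < 0" unfolding k_def by simp
  then have "\<exists>x. s0 \<le> x \<and> x \<le> T \<and> k x = M"
    using lt assms T0 s0_pos
    by (intro IVT2') (auto intro: continuous_on_subset[OF k_cont])
  then obtain x where x: "s0 \<le> x" "x \<le> T" "k x = M" by blast
  have "x \<noteq> s0" using x lt by auto
  then show ?thesis using x by (intro exI[of _ x]) auto
qed

lemma L_III:
  assumes "k s1 = M" "0 < s1" "s1 < s0" "1 \<le> \<rho>" "0 \<le> Phi \<rho>" "Phi s1 < 0"
  shows "Phi s1 \<le> Phi 1"
proof (cases "1 \<le> s1")
  case True
  show ?thesis
  proof (rule Phi_down)
    fix z assume z: "1 < z" "z < s1"
    then have "k z < k s1" using assms by (intro k_up) auto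
    then show "k z \<le> M" using assms by simp
  qed (use True in auto)
next
  case False
  show ?thesis
  proof (cases "\<forall>z. s1 < z \<and> z < 1 \<longrightarrow> M \<le> k z")
    case True
    then show ?thesis using False assms by (intro Phi_up) auto
  next
    case nall: False
    then obtain z where z: "s1 < z" "z < 1" "k z < M" by (auto simp: not_le)
    have zs0: "s0 < z"
    proof (rule ccontr)
      assume "\<not> s0 < z"
      then have "k s1 < k z" using z assms by (intro k_up) auto
      then show False using z assms by simp
    qed
    have "Phi \<rho> \<le> Phi 1"
    proof (rule Phi_down)
      fix w assume w: "1 < w" "w < \<rho>"
      then have "k w < k z" using zs0 z by (intro k_down) auto
      then show "k w \<le> M" using z by simp
    qed (use assms in auto)
    then show ?thesis using assms by simp
  qed
qed

end


lemma lborel_affine_integral: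
  fixes f :: "'a::euclidean_space \<Rightarrow> real"
  assumes f[measurable]: "f \<in> borel_measurable borel" and c: "c \<noteq> 0"
  shows "integrable lborel (\<lambda>x. f (t + c *\<^sub>R x)) \<longleftrightarrow> integrable lborel f" (is ?I)
    and "integral\<^sup>L lborel f = \<bar>c\<bar> ^ DIM('a) * (\<integral>x. f (t + c *\<^sub>R x) \<partial>lborel)" (is ?E)
proof -
  let ?T = "\<lambda>x::'a. t + c *\<^sub>R x"
  let ?K = "\<bar>c\<bar> ^ DIM('a)"
  have K0: "0 < ?K" using c by simp
  have T[measurable]: "?T \<in> borel \<rightarrow>\<^sub>M borel" by simp
  have eq: "lborel = density (distr lborel borel ?T) (\<lambda>_. ennreal ?K)"
    using lborel_affine[OF c, of t] by simp
  have fm: "f \<in> borel_measurable (distr lborel borel ?T)" by simp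
  have i1: "integrable lborel f \<longleftrightarrow> integrable (density (distr lborel borel ?T) (\<lambda>_. ennreal ?K)) f"
    by (simp only: eq[symmetric])
  also have "\<dots> \<longleftrightarrow> integrable (distr lborel borel ?T) (\<lambda>x. ?K *\<^sub>R f x)"
    using fm K0 by (intro integrable_density) auto
  also have "\<dots> \<longleftrightarrow> integrable lborel (\<lambda>x. ?K *\<^sub>R f (?T x))"
    by (intro integrable_distr_eq) auto
  also have "\<dots> \<longleftrightarrow> integrable lborel (\<lambda>x. f (?T x))"
    using K0 by simp
  finally show ?I by simp
  have "integral\<^sup>L lborel f = integral\<^sup>L (density (distr lborel borel ?T) (\<lambda>_. ennreal ?K)) f"
    by (simp only: eq[symmetric])
  also have "\<dots> = integral\<^sup>L (distr lborel borel ?T) (\<lambda>x. ?K *\<^sub>R f x)"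
    using fm K0 by (intro integral_density) auto
  also have "\<dots> = integral\<^sup>L lborel (\<lambda>x. ?K *\<^sub>R f (?T x))"
    by (intro integral_distr) auto
  also have "\<dots> = ?K * integral\<^sup>L lborel (\<lambda>x. f (?T x))"
    by simp
  finally show ?E .
qed


definition smooth1 :: "(real \<Rightarrow> real) \<Rightarrow> bool" where
  "smooth1 f \<longleftrightarrow> (\<forall>k x. (deriv ^^ k) f differentiable (at x))"

lemma smooth1_family:
  assumes "\<And>k x. (F k has_real_derivative F (Suc k) x) (at x)"
  shows "(deriv ^^ k) (F 0) = F k" "smooth1 (F 0)"
proof -
  show eq: "(deriv ^^ k) (F 0) = F k" for k
  proof (induction k)
    case (Suc k)
    have "(deriv ^^ Suc k) (F 0) = deriv (F k)" using Suc by simp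
    also have "\<dots> = F (Suc k)" using assms by (intro ext DERIV_imp_deriv) 
    finally show ?case .
  qed simp
  show "smooth1 (F 0)" unfolding smooth1_def eq
    using assms real_differentiable_def by blast
qed

lemma smooth1_deriv:
  assumes "smooth1 f"
  shows "((deriv ^^ k) f has_real_derivative (deriv ^^ Suc k) f x) (at x)"
  using assms unfolding smooth1_def
  by (simp add: DERIV_deriv_iff_real_differentiable)

lemma smooth1_affine:
  assumes "smooth1 f"
  shows "smooth1 (\<lambda>x. f (c * x + d))"
proof -
  define G where "G k x = c ^ k * (deriv ^^ k) f (c * x + d)" for k x
  have "(G k has_real_derivative G (Suc k) x) (at x)" for k x
  proof -
    have "((\<lambda>x. (deriv ^^ k) f (c * x + d)) has_real_derivative (deriv ^^ Suc k) f (c * x + d) * c) (at x)"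
      by (rule DERIV_chain2[OF smooth1_deriv[OF assms]]) (auto intro!: derivative_eq_intros)
    then show ?thesis unfolding G_def
      by (auto intro!: derivative_eq_intros simp: algebra_simps)
  qed
  moreover have "G 0 = (\<lambda>x. f (c * x + d))" by (rule ext) (simp add: G_def)
  ultimately show ?thesis using smooth1_family(2)[of G] by metis
qed

definition smk :: "nat \<Rightarrow> (real \<Rightarrow> real) \<Rightarrow> bool" where
  "smk n f \<longleftrightarrow> (\<forall>k\<le>n. \<forall>x. (deriv ^^ k) f differentiable (at x))"

lemma smooth1_smk: "smooth1 f \<longleftrightarrow> (\<forall>n. smk n f)"
  unfolding smooth1_def smk_def by auto

lemma smk_Suc_mono: "smk (Suc n) f \<Longrightarrow> smk n f"
  unfolding smk_def by auto

lemma smk_deriv: "smk (Suc n) f \<Longrightarrow> smk n (deriv f)"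
  unfolding smk_def
proof (intro allI impI)
  fix k x assume "\<forall>k\<le>Suc n. \<forall>x. (deriv ^^ k) f differentiable at x" "k \<le> n"
  then have "(deriv ^^ Suc k) f differentiable at x" by auto
  then show "(deriv ^^ k) (deriv f) differentiable at x" by (simp only: funpow_Suc_right o_def)
qed

lemma deriv_add_fun:
  fixes f g :: "real \<Rightarrow> real"
  assumes "\<And>x. f differentiable (at x)" "\<And>x. g differentiable (at x)"
  shows "deriv (\<lambda>x. f x + g x) = (\<lambda>x. deriv f x + deriv g x)"
proof
  fix x
  have "((\<lambda>x. f x + g x) has_real_derivative deriv f x + deriv g x) (at x)"
    using assms by (intro DERIV_add) (auto simp: DERIV_deriv_iff_real_differentiable)
  then show "deriv (\<lambda>x. f x + g x) x = deriv f x + deriv g x" by (rule DERIV_imp_deriv)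
qed

lemma deriv_mult_fun:
  fixes f g :: "real \<Rightarrow> real"
  assumes "\<And>x. f differentiable (at x)" "\<And>x. g differentiable (at x)"
  shows "deriv (\<lambda>x. f x * g x) = (\<lambda>x. deriv f x * g x + f x * deriv g x)"
proof
  fix x
  have df: "(f has_real_derivative deriv f x) (at x)" and dg: "(g has_real_derivative deriv g x) (at x)"
    using assms by (auto simp: DERIV_deriv_iff_real_differentiable)
  have "((\<lambda>x. f x * g x) has_real_derivative deriv f x * g x + f x * deriv g x) (at x)"
    using DERIV_mult[OF df dg] by (simp add: algebra_simps)
  then show "deriv (\<lambda>x. f x * g x) x = deriv f x * g x + f x * deriv g x" by (rule DERIV_imp_deriv)
qed

lemma smk_add:
  assumes "smk n f" "smk n g"
  shows "k \<le> Suc n \<Longrightarrow> (deriv ^^ k) (\<lambda>x. f x + g x) = (\<lambda>x. (deriv ^^ k) f x + (deriv ^^ k) g x)"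
proof (induction k)
  case (Suc k)
  then have "k \<le> n" by simp
  then have d: "\<And>x. (deriv ^^ k) f differentiable (at x)" "\<And>x. (deriv ^^ k) g differentiable (at x)"
    using assms unfolding smk_def by auto
  have "(deriv ^^ Suc k) (\<lambda>x. f x + g x) = deriv ((deriv ^^ k) (\<lambda>x. f x + g x))" by simp
  also have "\<dots> = deriv (\<lambda>x. (deriv ^^ k) f x + (deriv ^^ k) g x)" using Suc by simp
  also have "\<dots> = (\<lambda>x. deriv ((deriv ^^ k) f) x + deriv ((deriv ^^ k) g) x)"
    by (rule deriv_add_fun[OF d])
  finally show ?case by simp
qed simp

lemma smk_add': "smk n f \<Longrightarrow> smk n g \<Longrightarrow> smk n (\<lambda>x. f x + g x)"
proof -
  assume a: "smk n f" "smk n g"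
  show ?thesis unfolding smk_def
  proof (intro allI impI)
    fix k x assume k: "k \<le> n"
    have "(deriv ^^ k) (\<lambda>x. f x + g x) = (\<lambda>x. (deriv ^^ k) f x + (deriv ^^ k) g x)"
      using smk_add[OF a] k by simp
    moreover have "(deriv ^^ k) f differentiable at x" "(deriv ^^ k) g differentiable at x"
      using a k unfolding smk_def by auto
    ultimately show "(deriv ^^ k) (\<lambda>x. f x + g x) differentiable at x"
      by (simp add: differentiable_add)
  qed
qed

lemma smk_mult: "smk n f \<Longrightarrow> smk n g \<Longrightarrow> smk n (\<lambda>x. f x * g x)"
proof (induction n arbitrary: f g)
  case 0
  then show ?case unfolding smk_def by (auto intro!: differentiable_mult)
next
  case (Suc n)
  have df: "\<And>x. f differentiable (at x)" and dg: "\<And>x. g differentiable (at x)"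
    using Suc.prems unfolding smk_def by (auto dest: spec[of _ 0])
  have e: "deriv (\<lambda>x. f x * g x) = (\<lambda>x. deriv f x * g x + f x * deriv g x)"
    by (rule deriv_mult_fun[OF df dg])
  have s: "smk n (\<lambda>x. deriv f x * g x + f x * deriv g x)"
  proof (rule smk_add')
    show "smk n (\<lambda>x. deriv f x * g x)"
      by (rule Suc.IH[OF smk_deriv[OF Suc.prems(1)] smk_Suc_mono[OF Suc.prems(2)]])
    show "smk n (\<lambda>x. f x * deriv g x)"
      by (rule Suc.IH[OF smk_Suc_mono[OF Suc.prems(1)] smk_deriv[OF Suc.prems(2)]])
  qed
  show ?case unfolding smk_def
  proof (intro allI impI)
    fix k x assume k: "k \<le> Suc n"
    show "(deriv ^^ k) (\<lambda>x. f x * g x) differentiable at x"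
    proof (cases k)
      case 0 then show ?thesis using df dg by (auto intro!: differentiable_mult)
    next
      case (Suc j)
      then have "(deriv ^^ k) (\<lambda>x. f x * g x) = (deriv ^^ j) (\<lambda>x. deriv f x * g x + f x * deriv g x)"
        by (simp only: funpow_Suc_right o_def e)
      moreover have "j \<le> n" using k Suc by simp
      ultimately show ?thesis using s unfolding smk_def by auto
    qed
  qed
qed

lemma smooth1_mult: "smooth1 f \<Longrightarrow> smooth1 g \<Longrightarrow> smooth1 (\<lambda>x. f x * g x)"
  unfolding smooth1_smk by (auto intro: smk_mult)


definition Ef :: "real \<Rightarrow> real" where
  "Ef t = (if 0 < t then exp (- inverse t) else 0)"

fun EP :: "nat \<Rightarrow> real poly" where
  "EP 0 = 1"
| "EP (Suc k) = [:0, 0, 1:] * (EP k - pderiv (EP k))"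

definition EF :: "nat \<Rightarrow> real \<Rightarrow> real" where
  "EF k t = (if 0 < t then poly (EP k) (inverse t) * exp (- inverse t) else 0)"

lemma poly_exp_lim: "((\<lambda>y. poly Q y * exp (- y)) \<longlongrightarrow> (0::real)) at_top"
proof -
  have e: "poly Q y * exp (- y) = (\<Sum>i\<le>degree Q. coeff Q i * (y ^ i / exp y))" for y :: real
  proof -
    have "poly Q y * exp (- y) = poly Q y / exp y" by (simp add: exp_minus field_simps)
    also have "\<dots> = (\<Sum>i\<le>degree Q. coeff Q i * y ^ i / exp y)"
      by (simp add: poly_altdef sum_divide_distrib)
    finally show ?thesis by simp
  qed
  have "((\<lambda>y. \<Sum>i\<le>degree Q. coeff Q i * (y ^ i / exp y)) \<longlongrightarrow> (\<Sum>i\<le>degree Q. coeff Q i * 0)) at_top"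
    by (intro tendsto_sum tendsto_mult tendsto_const tendsto_power_div_exp_0)
  then show ?thesis unfolding e by simp
qed

lemma EF_deriv: "(EF k has_real_derivative EF (Suc k) t) (at t)"
proof (cases t "0::real" rule: linorder_cases)
  case less
  have ev: "eventually (\<lambda>x. x \<in> {..<0}) (nhds t)" using less by (intro eventually_nhds_in_open) auto
  have ev': "eventually (\<lambda>x. EF k x = 0) (nhds t)" using ev by (rule eventually_mono) (simp add: EF_def)
  have "(EF k has_real_derivative 0) (at t) \<longleftrightarrow> ((\<lambda>_. 0) has_real_derivative 0) (at t)"
    by (rule DERIV_cong_ev[OF refl ev' refl])
  then show ?thesis using less by (simp add: EF_def)
next
  case greater
  let ?P = "EP k"
  have ev: "eventually (\<lambda>x. x \<in> {0<..}) (nhds t)" using greater by (intro eventually_nhds_in_open) auto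
  have d: "((\<lambda>x. poly ?P (inverse x) * exp (- inverse x)) has_real_derivative
      poly (pderiv ?P) (inverse t) * (- (inverse t * inverse t)) * exp (- inverse t)
      + poly ?P (inverse t) * (exp (- inverse t) * (inverse t * inverse t))) (at t)"
    using greater
    by (auto intro!: derivative_eq_intros DERIV_chain2[OF poly_DERIV] simp: power2_eq_square)
  have "poly (pderiv ?P) (inverse t) * (- (inverse t * inverse t)) * exp (- inverse t)
      + poly ?P (inverse t) * (exp (- inverse t) * (inverse t * inverse t)) = EF (Suc k) t"
    using greater by (simp add: EF_def algebra_simps)
  with d have "((\<lambda>x. poly ?P (inverse x) * exp (- inverse x)) has_real_derivative EF (Suc k) t) (at t)"
    by simp
  moreover have "(EF k has_real_derivative EF (Suc k) t) (at t) \<longleftrightarrow>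
      ((\<lambda>x. poly ?P (inverse x) * exp (- inverse x)) has_real_derivative EF (Suc k) t) (at t)"
  proof (rule DERIV_cong_ev[OF refl _ refl])
    show "eventually (\<lambda>x. EF k x = poly ?P (inverse x) * exp (- inverse x)) (nhds t)"
      using ev by (rule eventually_mono) (simp add: EF_def)
  qed
  ultimately show ?thesis by simp
next
  case equal
  have lim: "((\<lambda>h. EF k h / h) \<longlongrightarrow> 0) (at 0)"
  proof (rule filterlim_split_at)
    show "((\<lambda>h. EF k h / h) \<longlongrightarrow> 0) (at_left 0)"
    proof (rule tendsto_eventually)
      show "\<forall>\<^sub>F h in at_left 0. EF k h / h = 0"
        by (rule eventually_at_leftI[of "-1"]) (auto simp: EF_def)
    qed
    have "((\<lambda>y. poly (EP k * [:0, 1:]) y * exp (- y)) \<longlongrightarrow> (0::real)) at_top"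
      by (rule poly_exp_lim)
    then have "((\<lambda>h. poly (EP k * [:0, 1:]) (inverse h) * exp (- inverse h)) \<longlongrightarrow> (0::real)) (at_right 0)"
      by (simp add: filterlim_at_top_to_right)
    moreover have "\<forall>\<^sub>F h in at_right 0. poly (EP k * [:0, 1:]) (inverse h) * exp (- inverse h) = EF k h / h"
      by (rule eventually_at_rightI[of 0 1]) (auto simp: EF_def field_simps)
    ultimately show "((\<lambda>h. EF k h / h) \<longlongrightarrow> 0) (at_right 0)"
      by (rule Lim_transform_eventually)
  qed
  have "(EF k has_real_derivative 0) (at 0)"
    unfolding DERIV_def using lim by (simp add: EF_def)
  then show ?thesis using equal by (simp add: EF_def)
qed

lemma EF0: "EF 0 = Ef"
  by (rule ext) (simp add: EF_def Ef_def)

lemma smooth1_Ef: "smooth1 Ef"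
  using smooth1_family(2)[of EF, OF EF_deriv] by (simp add: EF0)

lemma Ef_nonneg: "0 \<le> Ef t" and Ef_le1: "Ef t \<le> 1" and Ef_pos: "0 < t \<Longrightarrow> 0 < Ef t"
  and Ef_zero: "t \<le> 0 \<Longrightarrow> Ef t = 0"
  by (auto simp: Ef_def)


lemma line_deriv_at:
  fixes F :: "real^'n::finite \<Rightarrow> real"
  assumes "F differentiable (at (y + t0 *\<^sub>R axis i 1))"
  shows "((\<lambda>t. F (y + t *\<^sub>R axis i 1)) has_real_derivative partial_deriv i F (y + t0 *\<^sub>R axis i 1)) (at t0)"
proof -
  let ?e = "axis i (1::real) :: real^'n"
  let ?z = "y + t0 *\<^sub>R ?e"
  obtain F' where F': "(F has_derivative F') (at ?z)" using assms unfolding differentiable_def by blast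
  have bl: "bounded_linear F'" using F' by (rule has_derivative_bounded_linear)
  have lin: "F' (h *\<^sub>R ?e) = h * F' ?e" for h using linear_simps(5)[OF bl] by simp
  have d1: "((\<lambda>t. F (y + t *\<^sub>R ?e)) has_real_derivative F' ?e) (at t0)"
  proof -
    have "((\<lambda>t. F (y + t *\<^sub>R ?e)) has_derivative (\<lambda>h. F' (h *\<^sub>R ?e))) (at t0)"
      by (rule has_derivative_compose[of "\<lambda>t. y + t *\<^sub>R ?e" _ _ _ F])
         (auto intro!: derivative_eq_intros F')
    moreover have "(\<lambda>h. F' (h *\<^sub>R ?e)) = (*) (F' ?e)" by (rule ext) (simp add: lin)
    ultimately show ?thesis unfolding has_field_derivative_def by simp
  qed
  have d2: "((\<lambda>t. F (?z + t *\<^sub>R ?e)) has_real_derivative F' ?e) (at 0)"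
  proof -
    have "((\<lambda>t. F (?z + t *\<^sub>R ?e)) has_derivative (\<lambda>h. F' (h *\<^sub>R ?e))) (at 0)"
      by (rule has_derivative_compose[of "\<lambda>t. ?z + t *\<^sub>R ?e" _ _ _ F])
         (auto intro!: derivative_eq_intros F')
    moreover have "(\<lambda>h. F' (h *\<^sub>R ?e)) = (*) (F' ?e)" by (rule ext) (simp add: lin)
    ultimately show ?thesis unfolding has_field_derivative_def by simp
  qed
  have "partial_deriv i F ?z = F' ?e" unfolding partial_deriv_def by (rule DERIV_imp_deriv[OF d2])
  with d1 show ?thesis by simp
qed

lemma line_deriv:
  fixes F :: "real^'n::finite \<Rightarrow> real"
  assumes "F differentiable (at y)"
  shows "((\<lambda>t. F (y + t *\<^sub>R axis i 1)) has_real_derivative partial_deriv i F y) (at 0)"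
  using line_deriv_at[of F y 0 i] assms by simp

lemma axis_nth': "axis i (1::real) $ j = (if j = i then 1 else 0)"
  by (simp add: axis_def)

lemma partial_prod:
  fixes f :: "'n::finite \<Rightarrow> real \<Rightarrow> real"
  assumes "\<And>j t. f j differentiable (at t)"
  shows "partial_deriv i (\<lambda>x. \<Prod>j\<in>UNIV. f j (x $ j)) x
     = (\<Prod>j\<in>UNIV. (if j = i then deriv (f j) else f j) (x $ j))"
proof -
  let ?R = "\<Prod>j\<in>UNIV - {i}. f j (x $ j)"
  have e: "(\<Prod>j\<in>UNIV. f j ((x + t *\<^sub>R axis i 1) $ j)) = f i (x $ i + t) * ?R" for t
  proof -
    have "(\<Prod>j\<in>UNIV. f j ((x + t *\<^sub>R axis i 1) $ j)) = f i ((x + t *\<^sub>R axis i 1) $ i) *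
        (\<Prod>j\<in>UNIV - {i}. f j ((x + t *\<^sub>R axis i 1) $ j))"
      by (rule prod.remove) auto
    also have "(\<Prod>j\<in>UNIV - {i}. f j ((x + t *\<^sub>R axis i 1) $ j)) = ?R"
      by (rule prod.cong) (auto simp: axis_nth')
    finally show ?thesis by (simp add: axis_nth')
  qed
  have d: "((\<lambda>t. f i (x $ i + t) * ?R) has_real_derivative deriv (f i) (x $ i) * ?R) (at 0)"
  proof -
    have fi: "(f i has_real_derivative deriv (f i) (x $ i + 0)) (at (x $ i + 0))"
      using assms by (simp add: DERIV_deriv_iff_real_differentiable)
    have gi: "((\<lambda>t. x $ i + t) has_real_derivative 1) (at 0)" by (auto intro!: derivative_eq_intros)
    have "((\<lambda>t. f i (x $ i + t)) has_real_derivative deriv (f i) (x $ i)) (at 0)"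
      using DERIV_chain2[OF fi gi] by simp
    then show ?thesis by (intro derivative_eq_intros) auto
  qed
  have "partial_deriv i (\<lambda>x. \<Prod>j\<in>UNIV. f j (x $ j)) x = deriv (f i) (x $ i) * ?R"
    unfolding partial_deriv_def e by (rule DERIV_imp_deriv[OF d])
  also have "\<dots> = (\<Prod>j\<in>UNIV. (if j = i then deriv (f j) else f j) (x $ j))"
  proof -
    have "(\<Prod>j\<in>UNIV. (if j = i then deriv (f j) else f j) (x $ j)) = (if i = i then deriv (f i) else f i) (x $ i) *
        (\<Prod>j\<in>UNIV - {i}. (if j = i then deriv (f j) else f j) (x $ j))"
      by (rule prod.remove) auto
    also have "(\<Prod>j\<in>UNIV - {i}. (if j = i then deriv (f j) else f j) (x $ j)) = ?R"
      by (rule prod.cong) auto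
    finally show ?thesis by simp
  qed
  finally show ?thesis .
qed

lemma differentiable_prod_coord:
  fixes f :: "'n::finite \<Rightarrow> real \<Rightarrow> real"
  assumes "\<And>j t. f j differentiable (at t)"
  shows "(\<lambda>x::real^'n. \<Prod>j\<in>UNIV. f j (x $ j)) differentiable (at x)"
proof -
  have "(\<lambda>x::real^'n. f j (x $ j)) differentiable (at x)" for j
  proof -
    have "(\<lambda>x::real^'n. x $ j) differentiable (at x)"
      by (simp add: bounded_linear_imp_differentiable bounded_linear_vec_nth)
    moreover have "f j differentiable (at (x $ j))" using assms by simp
    ultimately show ?thesis using differentiable_chain_at[of "\<lambda>x::real^'n. x $ j" x "f j"]
      by (simp add: o_def)
  qed
  then have "\<forall>j. \<exists>D. ((\<lambda>x::real^'n. f j (x $ j)) has_derivative D) (at x)"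
    unfolding differentiable_def by blast
  from choice[OF this] obtain D where D: "\<And>j. ((\<lambda>x::real^'n. f j (x $ j)) has_derivative D j) (at x)" by blast
  show ?thesis
    using has_derivative_prod[of UNIV "\<lambda>j x. f j (x $ j)" D x UNIV] D
    unfolding differentiable_def by blast
qed


definition cnt :: "'n list \<Rightarrow> 'n \<Rightarrow> nat" where
  "cnt is j = length (filter (\<lambda>k. k = j) is)"

lemma iter_partial_prod:
  fixes f :: "'n::finite \<Rightarrow> real \<Rightarrow> real"
  assumes sm: "\<And>j. smooth1 (f j)"
  shows "iter_partial is (\<lambda>x. \<Prod>j\<in>UNIV. f j (x $ j)) = (\<lambda>x. \<Prod>j\<in>UNIV. (deriv ^^ cnt is j) (f j) (x $ j))"
proof (induction "is")
  case Nil
  then show ?case by (simp add: cnt_def)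
next
  case (Cons i "is")
  have d: "(deriv ^^ cnt is j) (f j) differentiable (at t)" for j t
    using sm unfolding smooth1_def by blast
  show ?case
  proof
    fix x
    have "iter_partial (i # is) (\<lambda>x. \<Prod>j\<in>UNIV. f j (x $ j)) x
        = partial_deriv i (\<lambda>x. \<Prod>j\<in>UNIV. (deriv ^^ cnt is j) (f j) (x $ j)) x"
      using Cons by simp
    also have "\<dots> = (\<Prod>j\<in>UNIV. (if j = i then deriv ((deriv ^^ cnt is j) (f j)) else (deriv ^^ cnt is j) (f j)) (x $ j))"
      by (rule partial_prod[OF d])
    also have "\<dots> = (\<Prod>j\<in>UNIV. (deriv ^^ cnt (i # is) j) (f j) (x $ j))"
      by (rule prod.cong) (auto simp: cnt_def)
    finally show "iter_partial (i # is) (\<lambda>x. \<Prod>j\<in>UNIV. f j (x $ j)) x = (\<Prod>j\<in>UNIV. (deriv ^^ cnt (i # is) j) (f j) (x $ j))" .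
  qed
qed

lemma smooth_prod:
  fixes f :: "'n::finite \<Rightarrow> real \<Rightarrow> real"
  assumes sm: "\<And>j. smooth1 (f j)"
  shows "smooth_fun (\<lambda>x::real^'n. \<Prod>j\<in>UNIV. f j (x $ j))"
  unfolding smooth_fun_def iter_partial_prod[OF sm]
proof (intro allI)
  fix "is" :: "'n list" and x :: "real^'n"
  show "(\<lambda>x. \<Prod>j\<in>UNIV. (deriv ^^ cnt is j) (f j) (x $ j)) differentiable at x"
    using sm unfolding smooth1_def by (intro differentiable_prod_coord) blast
qed

lemma test_prod:
  fixes f :: "'n::finite \<Rightarrow> real \<Rightarrow> real" and a b :: "real^'n"
  assumes sm: "\<And>j. smooth1 (f j)" and z: "\<And>j t. t < a $ j \<or> b $ j < t \<Longrightarrow> f j t = 0"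
  shows "test_fun (\<lambda>x::real^'n. \<Prod>j\<in>UNIV. f j (x $ j))"
  unfolding test_fun_def
proof
  show "smooth_fun (\<lambda>x::real^'n. \<Prod>j\<in>UNIV. f j (x $ j))" by (rule smooth_prod[OF sm])
  have sub: "{x. (\<Prod>j\<in>UNIV. f j (x $ j)) \<noteq> 0} \<subseteq> cbox a b"
  proof
    fix x assume x: "x \<in> {x. (\<Prod>j\<in>UNIV. f j (x $ j)) \<noteq> 0}"
    show "x \<in> cbox a b"
    proof (rule ccontr)
      assume "x \<notin> cbox a b"
      then obtain j where "x $ j < a $ j \<or> b $ j < x $ j" by (auto simp: mem_box_cart not_le)
      then have "f j (x $ j) = 0" by (rule z)
      then have "(\<Prod>j\<in>UNIV. f j (x $ j)) = 0" by (intro prod_zero) auto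
      then show False using x by simp
    qed
  qed
  have "closure {x. (\<Prod>j\<in>UNIV. f j (x $ j)) \<noteq> 0} \<subseteq> cbox a b"
    by (rule closure_minimal[OF sub]) (rule closed_cbox)
  then have "closure {x. (\<Prod>j\<in>UNIV. f j (x $ j)) \<noteq> 0} = cbox a b \<inter> closure {x. (\<Prod>j\<in>UNIV. f j (x $ j)) \<noteq> 0}"
    by blast
  moreover have "compact (cbox a b \<inter> closure {x. (\<Prod>j\<in>UNIV. f j (x $ j)) \<noteq> 0})"
    by (intro compact_Int_closed) auto
  ultimately show "compact (closure {x. (\<Prod>j\<in>UNIV. f j (x $ j)) \<noteq> 0})" by simp
qed


lemma cont_support_integrable:
  fixes f :: "'a::euclidean_space \<Rightarrow> real"
  assumes "continuous_on UNIV f" "\<And>x. R < norm x \<Longrightarrow> f x = 0"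
  shows "integrable lborel f"
proof -
  have "f = (\<lambda>x. indicator (cball 0 R) x *\<^sub>R f x)"
    using assms(2) by (auto simp: indicator_def fun_eq_iff not_le)
  moreover have "integrable lborel (\<lambda>x. indicator (cball 0 R) x *\<^sub>R f x)"
    by (rule borel_integrable_compact) (auto intro: continuous_on_subset[OF assms(1)])
  ultimately show ?thesis by simp
qed

lemma cont_support_bound:
  fixes f :: "'a::euclidean_space \<Rightarrow> real"
  assumes "continuous_on UNIV f" "\<And>x. R < norm x \<Longrightarrow> f x = 0"
  shows "\<exists>M. \<forall>x. \<bar>f x\<bar> \<le> M"
proof -
  have "compact (f ` cball 0 R)"
    by (rule compact_continuous_image) (auto intro: continuous_on_subset[OF assms(1)])
  then obtain M where M: "\<And>y. y \<in> f ` cball 0 R \<Longrightarrow> norm y \<le> M"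
    using compact_imp_bounded bounded_iff by metis
  have "\<bar>f x\<bar> \<le> max M 0" for x
  proof (cases "norm x \<le> R")
    case True then show ?thesis using M[of "f x"] by auto
  next
    case False then show ?thesis using assms(2) by simp
  qed
  then show ?thesis by blast
qed

lemma ibp_zero:
  fixes \<psi> :: "real^'n::finite \<Rightarrow> real"
  assumes dif: "\<And>x. \<psi> differentiable (at x)"
    and cont: "continuous_on UNIV (partial_deriv i \<psi>)"
    and supp: "\<And>x. R < norm x \<Longrightarrow> \<psi> x = 0"
  shows "integrable lborel (partial_deriv i \<psi>)" "(\<integral>x. partial_deriv i \<psi> x \<partial>lborel) = 0"
proof -
  let ?e = "axis i (1::real) :: real^'n"
  let ?d = "partial_deriv i \<psi>"
  have ne: "norm ?e = 1" by simp
  have cpsi: "continuous_on UNIV \<psi>"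
    using dif differentiable_imp_continuous_within continuous_at_imp_continuous_on by blast
  have intpsi: "integrable lborel \<psi>" by (rule cont_support_integrable[OF cpsi supp])
  have mpsi[measurable]: "\<psi> \<in> borel_measurable borel" by (rule borel_measurable_continuous_onI[OF cpsi])
  have md[measurable]: "?d \<in> borel_measurable borel" by (rule borel_measurable_continuous_onI[OF cont])
  have dsupp: "?d x = 0" if x: "R < norm x" for x
  proof -
    have ev: "eventually (\<lambda>t. R < norm (x + t *\<^sub>R ?e)) (nhds 0)"
    proof -
      have "open {t::real. R < norm (x + t *\<^sub>R ?e)}"
        by (intro open_Collect_less continuous_intros)
      then have "eventually (\<lambda>t. t \<in> {t::real. R < norm (x + t *\<^sub>R ?e)}) (nhds 0)"
        using x by (intro eventually_nhds_in_open) auto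
      then show ?thesis by simp
    qed
    have "((\<lambda>t. \<psi> (x + t *\<^sub>R ?e)) has_real_derivative ?d x) (at 0)" by (rule line_deriv[OF dif])
    moreover have "((\<lambda>t. \<psi> (x + t *\<^sub>R ?e)) has_real_derivative 0) (at 0)"
    proof -
      have "((\<lambda>t. \<psi> (x + t *\<^sub>R ?e)) has_real_derivative 0) (at 0) \<longleftrightarrow> ((\<lambda>_. 0) has_real_derivative 0) (at 0)"
        by (rule DERIV_cong_ev[OF refl _ refl]) (use ev in \<open>auto elim!: eventually_mono intro: supp\<close>)
      then show ?thesis by simp
    qed
    ultimately show ?thesis by (rule DERIV_unique)
  qed
  obtain M where M: "\<And>x. \<bar>?d x\<bar> \<le> M" using cont_support_bound[OF cont dsupp] by blast
  show intd: "integrable lborel ?d" by (rule cont_support_integrable[OF cont dsupp])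
  define h where "h n = 1 / real (Suc n)" for n
  have h0: "0 < h n" "h n \<le> 1" for n unfolding h_def by (auto simp: field_simps)
  define Q where "Q n x = (\<psi> (x + h n *\<^sub>R ?e) - \<psi> x) / h n" for n x
  have mQ[measurable]: "Q n \<in> borel_measurable borel" for n unfolding Q_def by measurable
  have intQ: "integrable lborel (\<lambda>x. \<psi> (x + h n *\<^sub>R ?e))" for n
    using lborel_affine_integral(1)[OF mpsi, of 1 "h n *\<^sub>R ?e"] intpsi by (simp add: add.commute)
  have intQ0: "(\<integral>x. Q n x \<partial>lborel) = 0" for n
  proof -
    have "(\<integral>x. \<psi> x \<partial>lborel) = (\<integral>x. \<psi> (x + h n *\<^sub>R ?e) \<partial>lborel)"
      using lborel_affine_integral(2)[OF mpsi, of 1 "h n *\<^sub>R ?e"] by (simp add: add.commute)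
    then show ?thesis unfolding Q_def using intQ intpsi by simp
  qed
  have bound: "\<bar>Q n x\<bar> \<le> indicator (cball 0 (R + 1)) x * M" for n x
  proof (cases "norm x \<le> R + 1")
    case True
    obtain z where z: "0 < z" "z < h n"
      "\<psi> (x + h n *\<^sub>R ?e) - \<psi> (x + 0 *\<^sub>R ?e) = (h n - 0) * ?d (x + z *\<^sub>R ?e)"
      using MVT2[of 0 "h n" "\<lambda>t. \<psi> (x + t *\<^sub>R ?e)" "\<lambda>t. ?d (x + t *\<^sub>R ?e)"] h0[of n]
        line_deriv_at[OF dif] by blast
    have "Q n x = ?d (x + z *\<^sub>R ?e)" unfolding Q_def using z h0[of n] by simp
    then show ?thesis using M True by (simp add: indicator_def)
  next
    case False
    have "R < norm (x + h n *\<^sub>R ?e)"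
    proof -
      have "norm x \<le> norm (x + h n *\<^sub>R ?e) + norm (h n *\<^sub>R ?e)" using norm_triangle_ineq4[of "x + h n *\<^sub>R ?e" "h n *\<^sub>R ?e"] by simp
      then show ?thesis using False h0[of n] by simp
    qed
    then show ?thesis using False supp unfolding Q_def by (simp add: indicator_def)
  qed
  have lim: "(\<lambda>n. Q n x) \<longlonglongrightarrow> ?d x" for x
  proof -
    have "((\<lambda>t. \<psi> (x + t *\<^sub>R ?e)) has_real_derivative ?d x) (at 0)" by (rule line_deriv[OF dif])
    then have "((\<lambda>t. (\<psi> (x + t *\<^sub>R ?e) - \<psi> x) / t) \<longlongrightarrow> ?d x) (at 0)"
      unfolding DERIV_def by simp
    moreover have "h \<longlonglongrightarrow> 0" unfolding h_def by (rule LIMSEQ_Suc[OF lim_const_over_n[of 1]])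
    moreover have "\<forall>n. h n \<in> UNIV - {0}" using h0 by (simp add: less_imp_neq[symmetric])
    ultimately have "((\<lambda>t. (\<psi> (x + t *\<^sub>R ?e) - \<psi> x) / t) \<circ> h) \<longlonglongrightarrow> ?d x"
      unfolding tendsto_at_iff_sequentially by blast
    then show ?thesis unfolding Q_def o_def .
  qed
  have intw: "integrable lborel (\<lambda>x::real^'n. indicator (cball 0 (R + 1)) x * M)"
  proof -
    have "emeasure lborel (cball (0::real^'n) (R + 1)) < \<infinity>" by (rule emeasure_lborel_cball_finite)
    then have "integrable lborel (indicator (cball (0::real^'n) (R + 1)) :: real^'n \<Rightarrow> real)"
      by (intro integrable_real_indicator) auto
    then show ?thesis by (rule integrable_mult_left)
  qed
  have "(\<lambda>n. \<integral>x. Q n x \<partial>lborel) \<longlonglongrightarrow> (\<integral>x. ?d x \<partial>lborel)"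
  proof (rule integral_dominated_convergence[OF _ _ intw])
  qed (use lim bound in auto)
  then show "(\<integral>x. ?d x \<partial>lborel) = 0" unfolding intQ0 by (simp add: LIMSEQ_const_iff)
qed


lemma partial_supp:
  fixes \<psi> :: "real^'n::finite \<Rightarrow> real"
  assumes dif: "\<And>x. \<psi> differentiable (at x)"
    and supp: "\<And>x. R < norm x \<Longrightarrow> \<psi> x = 0" and x: "R < norm x"
  shows "partial_deriv i \<psi> x = 0"
proof -
  let ?e = "axis i (1::real) :: real^'n"
  have ev: "eventually (\<lambda>t. R < norm (x + t *\<^sub>R ?e)) (nhds 0)"
  proof -
    have "open {t::real. R < norm (x + t *\<^sub>R ?e)}"
      by (intro open_Collect_less continuous_intros)
    then have "eventually (\<lambda>t. t \<in> {t::real. R < norm (x + t *\<^sub>R ?e)}) (nhds 0)"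
      using x by (intro eventually_nhds_in_open) auto
    then show ?thesis by simp
  qed
  have "((\<lambda>t. \<psi> (x + t *\<^sub>R ?e)) has_real_derivative partial_deriv i \<psi> x) (at 0)" by (rule line_deriv[OF dif])
  moreover have "((\<lambda>t. \<psi> (x + t *\<^sub>R ?e)) has_real_derivative 0) (at 0)"
  proof -
    have "((\<lambda>t. \<psi> (x + t *\<^sub>R ?e)) has_real_derivative 0) (at 0) \<longleftrightarrow> ((\<lambda>_. 0) has_real_derivative 0) (at 0)"
      by (rule DERIV_cong_ev[OF refl _ refl]) (use ev in \<open>auto elim!: eventually_mono intro: supp\<close>)
    then show ?thesis by simp
  qed
  ultimately show ?thesis by (rule DERIV_unique)
qed

lemma test_diff: "test_fun \<phi> \<Longrightarrow> \<phi> differentiable (at x)"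
  unfolding test_fun_def smooth_fun_def using iter_partial.simps(1) by metis

lemma test_pdiff: "test_fun \<phi> \<Longrightarrow> partial_deriv i \<phi> differentiable (at x)"
  unfolding test_fun_def smooth_fun_def using iter_partial.simps by metis

lemma test_cont: "test_fun \<phi> \<Longrightarrow> continuous_on UNIV \<phi>"
  using test_diff differentiable_imp_continuous_within continuous_at_imp_continuous_on by blast

lemma test_pcont: "test_fun \<phi> \<Longrightarrow> continuous_on UNIV (partial_deriv i \<phi>)"
  using test_pdiff differentiable_imp_continuous_within continuous_at_imp_continuous_on by blast

lemma test_supp:
  fixes \<phi> :: "real^'n::finite \<Rightarrow> real"
  assumes "test_fun \<phi>"
  obtains R where "\<And>x. R < norm x \<Longrightarrow> \<phi> x = 0"
proof -
  have "bounded (closure {x. \<phi> x \<noteq> 0})" using assms unfolding test_fun_def by (simp add: compact_imp_bounded)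
  then obtain B where B: "\<And>x. x \<in> closure {x. \<phi> x \<noteq> 0} \<Longrightarrow> norm x \<le> B" unfolding bounded_iff by blast
  have "\<phi> x = 0" if "B < norm x" for x
    using B[of x] closure_subset[of "{x. \<phi> x \<noteq> 0}"] that by force
  then show ?thesis using that by blast
qed

lemma test_partial_supp:
  fixes \<phi> :: "real^'n::finite \<Rightarrow> real"
  assumes "test_fun \<phi>" "\<And>x. R < norm x \<Longrightarrow> \<phi> x = 0" "R < norm x"
  shows "partial_deriv i \<phi> x = 0"
  using partial_supp[OF test_diff[OF assms(1)] assms(2,3)] .

lemma partial_mult:
  fixes u \<phi> :: "real^'n::finite \<Rightarrow> real"
  assumes "u differentiable (at x)" "\<phi> differentiable (at x)"
  shows "partial_deriv i (\<lambda>x. u x * \<phi> x) x = partial_deriv i u x * \<phi> x + u x * partial_deriv i \<phi> x"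
proof -
  have "((\<lambda>t. u (x + t *\<^sub>R axis i 1) * \<phi> (x + t *\<^sub>R axis i 1)) has_real_derivative
     partial_deriv i u x * \<phi> x + partial_deriv i \<phi> x * u x) (at 0)"
    using DERIV_mult[OF line_deriv[OF assms(1)] line_deriv[OF assms(2)], of i i] by simp
  then show ?thesis unfolding partial_deriv_def[of i "\<lambda>x. u x * \<phi> x"]
    by (subst DERIV_imp_deriv) (auto simp: algebra_simps)
qed

lemma test_ibp:
  fixes u \<phi> :: "real^'n::finite \<Rightarrow> real"
  assumes u: "test_fun u" and \<phi>: "test_fun \<phi>"
  shows "integrable lborel (\<lambda>x. u x * partial_deriv i \<phi> x)"
    "integrable lborel (\<lambda>x. partial_deriv i u x * \<phi> x)"
    "(\<integral>x. u x * partial_deriv i \<phi> x \<partial>lborel) = - (\<integral>x. partial_deriv i u x * \<phi> x \<partial>lborel)"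
proof -
  obtain R where R: "\<And>x. R < norm x \<Longrightarrow> u x = 0" using test_supp[OF u] by blast
  have du: "\<And>x. u differentiable (at x)" and dp: "\<And>x. \<phi> differentiable (at x)"
    using test_diff u \<phi> by blast+
  have cu: "continuous_on UNIV u" "continuous_on UNIV (partial_deriv i u)"
    using test_cont test_pcont u by blast+
  have cp: "continuous_on UNIV \<phi>" "continuous_on UNIV (partial_deriv i \<phi>)"
    using test_cont test_pcont \<phi> by blast+
  show i1: "integrable lborel (\<lambda>x. u x * partial_deriv i \<phi> x)"
    by (rule cont_support_integrable[of _ R]) (use cu cp R in \<open>auto intro!: continuous_intros\<close>)
  show i2: "integrable lborel (\<lambda>x. partial_deriv i u x * \<phi> x)"
    by (rule cont_support_integrable[of _ R])
       (use cu cp R test_partial_supp[OF u R] in \<open>auto intro!: continuous_intros\<close>)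
  have pe: "partial_deriv i (\<lambda>x. u x * \<phi> x) = (\<lambda>x. partial_deriv i u x * \<phi> x + u x * partial_deriv i \<phi> x)"
    using partial_mult[OF du dp] by (intro ext) simp
  have "(\<integral>x. partial_deriv i (\<lambda>x. u x * \<phi> x) x \<partial>lborel) = 0"
  proof (rule ibp_zero(2)[of _ i R])
    show "(\<lambda>x. u x * \<phi> x) differentiable (at x)" for x using du dp by (rule differentiable_mult)
    show "continuous_on UNIV (partial_deriv i (\<lambda>x. u x * \<phi> x))"
      unfolding pe using cu cp by (intro continuous_intros)
    show "R < norm x \<Longrightarrow> u x * \<phi> x = 0" for x using R by simp
  qed
  then have "(\<integral>x. partial_deriv i u x * \<phi> x \<partial>lborel) + (\<integral>x. u x * partial_deriv i \<phi> x \<partial>lborel) = 0"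
    unfolding pe using i1 i2 by simp
  then show "(\<integral>x. u x * partial_deriv i \<phi> x \<partial>lborel) = - (\<integral>x. partial_deriv i u x * \<phi> x \<partial>lborel)"
    by simp
qed


lemma cont_not_AE_zero:
  fixes f :: "'a::euclidean_space \<Rightarrow> real"
  assumes "continuous_on UNIV f" "f x0 \<noteq> 0"
  shows "\<not> (AE x in lborel. f x = 0)"
proof
  assume ae: "AE x in lborel. f x = 0"
  have "open {x. f x \<noteq> 0}" using assms(1) by (intro open_Collect_neq continuous_intros) auto
  moreover have "x0 \<in> {x. f x \<noteq> 0}" using assms(2) by simp
  ultimately obtain a b where ab: "box a b \<subseteq> {x. f x \<noteq> 0}" "\<forall>i\<in>Basis. a \<bullet> i < b \<bullet> i"
    by (rule open_contains_box) blast
  have "AE x in lborel. x \<notin> box a b" using ae ab(1) by (auto elim!: AE_mp)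
  then have "box a b \<in> null_sets lborel" by (subst AE_iff_null_sets) auto
  then have "emeasure lborel (box a b) = 0" by auto
  moreover have "0 < (\<Prod>i\<in>Basis. (b - a) \<bullet> i)"
    using ab(2) by (intro prod_pos) (auto simp: inner_diff_left)
  moreover have "emeasure lborel (box a b) = ennreal (\<Prod>i\<in>Basis. (b - a) \<bullet> i)"
    using ab(2) by (subst emeasure_lborel_box_eq) (auto simp: less_imp_le)
  ultimately show False by (metis ennreal_eq_0_iff not_le)
qed

lemma Lp_pos_iff:
  fixes u :: "'a::euclidean_space \<Rightarrow> real"
  assumes "integrable lborel (\<lambda>x. \<bar>u x\<bar> powr r)"
  shows "(\<integral>x. \<bar>u x\<bar> powr r \<partial>lborel) = 0 \<longleftrightarrow> (AE x in lborel. u x = 0)"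
  using integral_nonneg_eq_0_iff_AE[OF assms] by simp

lemma Lnorm_powr: "0 < r \<Longrightarrow> Lnorm r u powr r = (\<integral>x. \<bar>u x\<bar> powr r \<partial>lborel)"
  unfolding Lnorm_def by (simp add: powr_powr integral_nonneg)

lemma test_W1p:
  fixes u :: "real^'n::finite \<Rightarrow> real"
  assumes u: "test_fun u" and p: "0 < p"
  shows "W1p p u" "weak_gradient u (\<lambda>x. \<chi> i. partial_deriv i u x)"
proof -
  obtain R where R: "\<And>x. R < norm x \<Longrightarrow> u x = 0" using test_supp[OF u] by blast
  have cu: "continuous_on UNIV u" using test_cont[OF u] .
  have cg: "continuous_on UNIV (\<lambda>x. \<chi> i. partial_deriv i u x)"
    using test_pcont[OF u] by (intro continuous_on_vec_lambda) auto
  show wg: "weak_gradient u (\<lambda>x. \<chi> i. partial_deriv i u x)"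
    unfolding weak_gradient_def using test_ibp[OF u] by simp
  have gs: "(\<chi> i. partial_deriv i u x) = 0" if "R < norm x" for x
    using test_partial_supp[OF u R that] by (simp add: vec_eq_iff)
  have "in_Lp p u"
    unfolding in_Lp_def
  proof
    show "u \<in> borel_measurable lborel" using cu by (simp add: borel_measurable_continuous_onI)
    have "continuous_on UNIV (\<lambda>x. \<bar>u x\<bar> powr p)"
      by (rule continuous_on_powr') (use cu p in \<open>auto intro: continuous_intros\<close>)
    then show "integrable lborel (\<lambda>x. \<bar>u x\<bar> powr p)"
      by (rule cont_support_integrable[of _ R]) (use R p in auto)
  qed
  moreover have "(\<lambda>x. \<chi> i. partial_deriv i u x) \<in> borel_measurable lborel"
    using cg by (simp add: borel_measurable_continuous_onI)
  moreover have "integrable lborel (\<lambda>x. norm (\<chi> i. partial_deriv i u x) powr p)"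
  proof (rule cont_support_integrable[of _ R])
    show "continuous_on UNIV (\<lambda>x. norm (\<chi> i. partial_deriv i u x) powr p)"
      by (rule continuous_on_powr') (use cg p in \<open>auto intro: continuous_intros\<close>)
  qed (use gs p in auto)
  ultimately show "W1p p u" unfolding W1p_def using wg by blast
qed

definition bump :: "real^'n::finite \<Rightarrow> real" where
  "bump x = (\<Prod>j\<in>UNIV. Ef (1 + x $ j) * Ef (1 - x $ j))"

lemma bump_test: "test_fun (bump :: real^'n::finite \<Rightarrow> real)"
proof -
  have s: "smooth1 (\<lambda>t. Ef (1 + t) * Ef (1 - t))"
  proof (rule smooth1_mult)
    show "smooth1 (\<lambda>t. Ef (1 + t))" using smooth1_affine[OF smooth1_Ef, of 1 1] by (simp add: add.commute)
    show "smooth1 (\<lambda>t. Ef (1 - t))" using smooth1_affine[OF smooth1_Ef, of "-1" 1] by simp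
  qed
  have "test_fun (\<lambda>x::real^'n. \<Prod>j\<in>UNIV. (\<lambda>j t. Ef (1 + t) * Ef (1 - t)) j (x $ j))"
    by (rule test_prod[where a="\<chi> j. -1" and b="\<chi> j. 1"]) (use s in \<open>auto simp: Ef_zero\<close>)
  then show ?thesis unfolding bump_def[abs_def] by simp
qed

lemma bump_nz: "\<not> (AE x in lborel. (bump :: real^'n::finite \<Rightarrow> real) x = 0)"
proof (rule cont_not_AE_zero[of _ 0])
  show "continuous_on UNIV (bump :: real^'n \<Rightarrow> real)" by (rule test_cont[OF bump_test])
  have "0 < Ef 1" by (simp add: Ef_pos)
  then show "(bump :: real^'n \<Rightarrow> real) 0 \<noteq> 0" unfolding bump_def by simp
qed


lemma AE_zero_boxes:
  fixes f :: "'a::euclidean_space \<Rightarrow> real"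
  assumes f[measurable]: "f \<in> borel_measurable borel" and int: "integrable lborel f"
    and z: "\<And>a b. (\<integral>x. indicator (box a b) x * f x \<partial>lborel) = 0"
  shows "AE x in lborel. f x = 0"
proof -
  define P where "P x = max (f x) 0" for x
  define N where "N x = max (- f x) 0" for x
  have [measurable]: "P \<in> borel_measurable borel" "N \<in> borel_measurable borel"
    unfolding P_def[abs_def] N_def[abs_def] by measurable
  have iP: "integrable lborel (\<lambda>x. indicator B x * P x)" if "B \<in> sets borel" for B
    by (rule Bochner_Integration.integrable_bound[OF integrable_norm[OF int]]) (use that in \<open>auto simp: P_def indicator_def\<close>)
  have iN: "integrable lborel (\<lambda>x. indicator B x * N x)" if "B \<in> sets borel" for B
    by (rule Bochner_Integration.integrable_bound[OF integrable_norm[OF int]]) (use that in \<open>auto simp: N_def indicator_def\<close>)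
  have e1: "emeasure (density lborel (\<lambda>x. ennreal (f x))) B = ennreal (\<integral>x. indicator B x * P x \<partial>lborel)"
    if B: "B \<in> sets borel" for B
  proof -
    have "emeasure (density lborel (\<lambda>x. ennreal (f x))) B = (\<integral>\<^sup>+x. ennreal (f x) * indicator B x \<partial>lborel)"
      using B by (subst emeasure_density) auto
    also have "\<dots> = (\<integral>\<^sup>+x. ennreal (indicator B x * P x) \<partial>lborel)"
      by (intro nn_integral_cong) (auto simp: P_def indicator_def max_def ennreal_neg)
    also have "\<dots> = ennreal (\<integral>x. indicator B x * P x \<partial>lborel)"
      using iP[OF B] by (intro nn_integral_eq_integral) (auto simp: P_def)
    finally show ?thesis .
  qed
  have e2: "emeasure (density lborel (\<lambda>x. ennreal (- f x))) B = ennreal (\<integral>x. indicator B x * N x \<partial>lborel)"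
    if B: "B \<in> sets borel" for B
  proof -
    have "emeasure (density lborel (\<lambda>x. ennreal (- f x))) B = (\<integral>\<^sup>+x. ennreal (- f x) * indicator B x \<partial>lborel)"
      using B by (subst emeasure_density) auto
    also have "\<dots> = (\<integral>\<^sup>+x. ennreal (indicator B x * N x) \<partial>lborel)"
      by (intro nn_integral_cong) (auto simp: N_def indicator_def max_def ennreal_neg)
    also have "\<dots> = ennreal (\<integral>x. indicator B x * N x \<partial>lborel)"
      using iN[OF B] by (intro nn_integral_eq_integral) (auto simp: N_def)
    finally show ?thesis .
  qed
  have PN: "(\<integral>x. indicator B x * P x \<partial>lborel) = (\<integral>x. indicator B x * N x \<partial>lborel)"
    if B: "B \<in> range (\<lambda>(a, b). box a b)" for B
  proof -
    obtain a b where Bab: "B = box a b" using B by auto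
    have "indicator B x * f x = indicator B x * P x - indicator B x * N x" for x
      by (auto simp: P_def N_def indicator_def)
    then have "(\<integral>x. indicator B x * f x \<partial>lborel) = (\<integral>x. indicator B x * P x \<partial>lborel) - (\<integral>x. indicator B x * N x \<partial>lborel)"
      using iP[of B] iN[of B] Bab by simp
    then show ?thesis using z[of a b] Bab by simp
  qed
  have eqm: "density lborel (\<lambda>x. ennreal (f x)) = density lborel (\<lambda>x. ennreal (- f x))"
  proof (rule measure_eqI_generator_eq[where E="range (\<lambda>(a, b). box a b)" and \<Omega>=UNIV
        and A="\<lambda>n::nat. box (- (real n *\<^sub>R One)) (real n *\<^sub>R One)"])
    show "Int_stable (range (\<lambda>(a, b). box a b :: 'a set))"
      by (auto simp: Int_stable_def box_Int_box)
    show "range (\<lambda>(a, b). box a b :: 'a set) \<subseteq> Pow UNIV" by simp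
    show "sets (density lborel (\<lambda>x. ennreal (f x))) = sigma_sets UNIV (range (\<lambda>(a, b). box a b))"
      by (simp add: borel_eq_box)
    show "sets (density lborel (\<lambda>x. ennreal (- f x))) = sigma_sets UNIV (range (\<lambda>(a, b). box a b))"
      by (simp add: borel_eq_box)
    show "range (\<lambda>n::nat. box (- (real n *\<^sub>R One)) (real n *\<^sub>R One) :: 'a set) \<subseteq> range (\<lambda>(a, b). box a b)"
      by auto
    show "(\<Union>n::nat. box (- (real n *\<^sub>R One)) (real n *\<^sub>R One) :: 'a set) = UNIV" by (rule UN_box_eq_UNIV)
    show "emeasure (density lborel (\<lambda>x. ennreal (f x))) (box (- (real n *\<^sub>R One)) (real n *\<^sub>R One)) \<noteq> \<infinity>" for n
      by (subst e1) auto
    show "emeasure (density lborel (\<lambda>x. ennreal (f x))) X = emeasure (density lborel (\<lambda>x. ennreal (- f x))) X"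
      if X: "X \<in> range (\<lambda>(a, b). box a b)" for X
    proof -
      have Xs: "X \<in> sets borel" using X by auto
      show ?thesis using e1[OF Xs] e2[OF Xs] PN[OF X] by simp
    qed
  qed
  have fin: "integral\<^sup>N lborel (\<lambda>x. ennreal (f x)) \<noteq> \<infinity>"
  proof -
    have "integral\<^sup>N lborel (\<lambda>x. ennreal (f x)) \<le> (\<integral>\<^sup>+x. ennreal (norm (f x)) \<partial>lborel)"
      by (intro nn_integral_mono) (simp add: ennreal_leI)
    also have "\<dots> < \<infinity>" using int by (simp add: integrable_iff_bounded)
    finally show ?thesis by simp
  qed
  have "AE x in lborel. ennreal (f x) = ennreal (- f x)"
    using finite_density_unique[of "\<lambda>x. ennreal (f x)" lborel "\<lambda>x. ennreal (- f x)"] eqm fin by auto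
  then show ?thesis
  proof (rule eventually_mono)
    fix x assume "ennreal (f x) = ennreal (- f x)"
    then show "f x = 0"
      by (cases "0 < f x"; cases "f x < 0") (auto simp: ennreal_neg)
  qed
qed


lemma Ef_scaled_lim:
  assumes "0 < s"
  shows "(\<lambda>n. Ef (real (Suc n) * s)) \<longlonglongrightarrow> 1"
proof -
  have "(\<lambda>n. inverse (real (Suc n) * s)) \<longlonglongrightarrow> 0"
  proof -
    have "(\<lambda>n. inverse (real (Suc n)) * inverse s) \<longlonglongrightarrow> 0 * inverse s"
      by (intro tendsto_mult tendsto_const LIMSEQ_inverse_real_of_nat)
    then show ?thesis by (simp add: mult.commute)
  qed
  then have "(\<lambda>n. exp (- inverse (real (Suc n) * s))) \<longlonglongrightarrow> exp (- 0)"
    by (intro tendsto_intros)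
  moreover have "Ef (real (Suc n) * s) = exp (- inverse (real (Suc n) * s))" for n
    using assms by (simp add: Ef_def)
  ultimately show ?thesis by simp
qed

lemma box_test_zero:
  fixes h :: "real^'n::finite \<Rightarrow> real"
  assumes hm[measurable]: "h \<in> borel_measurable borel"
    and loc: "integrable lborel (\<lambda>x. indicator (cbox a b) x * \<bar>h x\<bar>)"
    and t: "\<And>\<phi>. test_fun \<phi> \<Longrightarrow> (\<integral>x. h x * \<phi> x \<partial>lborel) = 0"
  shows "(\<integral>x. indicator (box a b) x * h x \<partial>lborel) = 0"
proof -
  define fa where "fa n j t = Ef (real (Suc n) * (t - a $ j)) * Ef (real (Suc n) * (b $ j - t))" for n j t
  define \<phi> where "\<phi> n x = (\<Prod>j\<in>UNIV. fa n j (x $ j))" for n and x :: "real^'n"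
  have sm: "smooth1 (fa n j)" for n j
  proof -
    have s1: "smooth1 (\<lambda>t. Ef (real (Suc n) * t + (- real (Suc n) * a $ j)))"
      by (rule smooth1_affine[OF smooth1_Ef])
    have s2: "smooth1 (\<lambda>t. Ef ((- real (Suc n)) * t + real (Suc n) * b $ j))"
      by (rule smooth1_affine[OF smooth1_Ef])
    have "fa n j = (\<lambda>t. Ef (real (Suc n) * t + (- real (Suc n) * a $ j)) * Ef ((- real (Suc n)) * t + real (Suc n) * b $ j))"
      unfolding fa_def by (rule ext) (simp add: algebra_simps)
    then show ?thesis using smooth1_mult[OF s1 s2] by simp
  qed
  have fa_z: "fa n j t = 0" if "t < a $ j \<or> b $ j < t" for n j t
  proof -
    have "real (Suc n) * (t - a $ j) \<le> 0 \<or> real (Suc n) * (b $ j - t) \<le> 0"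
      using that by (auto intro: mult_nonneg_nonpos)
    then show ?thesis unfolding fa_def using Ef_zero by auto
  qed
  have test: "test_fun (\<phi> n)" for n
    unfolding \<phi>_def[abs_def] by (rule test_prod[OF sm fa_z])
  have fa01: "0 \<le> fa n j t" "fa n j t \<le> 1" for n j t
    unfolding fa_def using Ef_nonneg Ef_le1 by (auto intro: mult_le_one)
  have \<phi>01: "0 \<le> \<phi> n x" "\<phi> n x \<le> 1" for n x
    unfolding \<phi>_def using fa01 by (auto intro: prod_nonneg prod_le_1)
  have \<phi>_out: "\<phi> n x = 0" if "x \<notin> cbox a b" for n x
  proof -
    have "\<not> (\<forall>j. a $ j \<le> x $ j \<and> x $ j \<le> b $ j)" using that by (simp add: mem_box_cart)
    then obtain j where "x $ j < a $ j \<or> b $ j < x $ j" by (auto simp: not_le)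
    then have "fa n j (x $ j) = 0" by (rule fa_z)
    then show ?thesis unfolding \<phi>_def by (intro prod_zero) auto
  qed
  have lim: "(\<lambda>n. h x * \<phi> n x) \<longlonglongrightarrow> indicator (box a b) x * h x" for x
  proof (cases "x \<in> box a b")
    case True
    then have ab: "a $ j < x $ j" "x $ j < b $ j" for j by (auto simp: mem_box_cart)
    have "(\<lambda>n. fa n j (x $ j)) \<longlonglongrightarrow> 1 * 1" for j
      unfolding fa_def using ab by (intro tendsto_mult Ef_scaled_lim) auto
    then have "(\<lambda>n. \<phi> n x) \<longlonglongrightarrow> (\<Prod>j\<in>(UNIV::'n set). 1)"
      unfolding \<phi>_def by (intro tendsto_prod) simp
    then have "(\<lambda>n. h x * \<phi> n x) \<longlonglongrightarrow> h x * 1" by (intro tendsto_mult tendsto_const) simp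
    then show ?thesis using True by simp
  next
    case False
    then obtain j where j: "x $ j \<le> a $ j \<or> b $ j \<le> x $ j" by (auto simp: mem_box_cart not_less)
    have "fa n j (x $ j) = 0" for n using j unfolding fa_def by (auto simp: Ef_zero mult_nonneg_nonpos mult_nonpos_nonneg)
    then have "\<phi> n x = 0" for n unfolding \<phi>_def by (intro prod_zero) auto
    then show ?thesis using False by simp
  qed
  have bound: "norm (h x * \<phi> n x) \<le> indicator (cbox a b) x * \<bar>h x\<bar>" for n x
  proof (cases "x \<in> cbox a b")
    case True
    have "\<bar>h x\<bar> * \<phi> n x \<le> \<bar>h x\<bar> * 1" using \<phi>01[of n x]
      by (intro mult_left_mono) auto
    then have "\<bar>h x * \<phi> n x\<bar> \<le> \<bar>h x\<bar> * 1" using \<phi>01[of n x] by (simp add: abs_mult)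
    then show ?thesis using True by simp
  next
    case False then show ?thesis using \<phi>_out by simp
  qed
  have m\<phi>: "(\<lambda>x. h x * \<phi> n x) \<in> borel_measurable lborel" for n
  proof -
    have [measurable]: "\<phi> n \<in> borel_measurable borel"
      using test_cont[OF test[of n]] by (simp add: borel_measurable_continuous_onI)
    show ?thesis by measurable
  qed
  have "(\<lambda>n. \<integral>x. h x * \<phi> n x \<partial>lborel) \<longlonglongrightarrow> (\<integral>x. indicator (box a b) x * h x \<partial>lborel)"
    by (rule integral_dominated_convergence[OF _ m\<phi> loc]) (use lim bound in auto)
  moreover have "(\<integral>x. h x * \<phi> n x \<partial>lborel) = 0" for n by (rule t[OF test])
  ultimately show ?thesis by (simp add: LIMSEQ_const_iff)
qed


lemma norm_le_1_powr: "1 \<le> p \<Longrightarrow> norm (x::'a::real_normed_vector) \<le> 1 + norm x powr p"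
proof (cases "norm x \<le> 1")
  case False
  assume p: "1 \<le> p"
  have "norm x powr 1 \<le> norm x powr p" using False p by (intro powr_mono) auto
  then show ?thesis using False by simp
next
  case True
  then show ?thesis using powr_ge_zero[of "norm x" p] by linarith
qed

lemma weak_grad_unique:
  fixes u :: "real^'n::finite \<Rightarrow> real" and g1 g2 :: "real^'n \<Rightarrow> real^'n"
  assumes p: "1 \<le> p"
    and w1: "weak_gradient u g1" "g1 \<in> borel_measurable lborel" "integrable lborel (\<lambda>x. norm (g1 x) powr p)"
    and w2: "weak_gradient u g2" "g2 \<in> borel_measurable lborel" "integrable lborel (\<lambda>x. norm (g2 x) powr p)"
  shows "AE x in lborel. g1 x = g2 x"
proof -
  have m1[measurable]: "g1 \<in> borel_measurable borel" using w1(2) by simp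
  have m2[measurable]: "g2 \<in> borel_measurable borel" using w2(2) by simp
  have comp: "AE x in lborel. g1 x $ i = g2 x $ i" for i
  proof -
    define h where "h x = g1 x $ i - g2 x $ i" for x
    have pr[measurable]: "(\<lambda>v::real^'n. v $ i) \<in> borel_measurable borel"
      by (intro borel_measurable_continuous_onI continuous_intros)
    have "(\<lambda>x. g1 x $ i) \<in> borel_measurable borel" "(\<lambda>x. g2 x $ i) \<in> borel_measurable borel"
      using measurable_compose[OF m1 pr] measurable_compose[OF m2 pr] by (simp_all add: o_def)
    then have hm[measurable]: "h \<in> borel_measurable borel" unfolding h_def[abs_def] by measurable
    have loc: "integrable lborel (\<lambda>x. indicator S x * \<bar>h x\<bar>)" if S: "S \<in> sets borel"
        "emeasure lborel S < \<infinity>" for S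
    proof (rule Bochner_Integration.integrable_bound)
      show "integrable lborel (\<lambda>x. 2 * indicator S x + norm (g1 x) powr p + norm (g2 x) powr p)"
      proof (intro Bochner_Integration.integrable_add)
        show "integrable lborel (\<lambda>x. 2 * indicat_real S x)"
          using S by (intro integrable_mult_right integrable_real_indicator) auto
      qed (use w1(3) w2(3) in auto)
      show "(\<lambda>x. indicator S x * \<bar>h x\<bar>) \<in> borel_measurable lborel" using S by simp
      show "AE x in lborel. norm (indicator S x * \<bar>h x\<bar>) \<le> norm (2 * indicator S x + norm (g1 x) powr p + norm (g2 x) powr p)"
      proof (intro AE_I2)
        fix x
        have "\<bar>h x\<bar> \<le> norm (g1 x) + norm (g2 x)" unfolding h_def
          using component_le_norm_cart[of "g1 x" i] component_le_norm_cart[of "g2 x" i] by linarith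
        also have "\<dots> \<le> 2 + norm (g1 x) powr p + norm (g2 x) powr p"
          using norm_le_1_powr[OF p, of "g1 x"] norm_le_1_powr[OF p, of "g2 x"] by linarith
        finally have "\<bar>h x\<bar> \<le> 2 + norm (g1 x) powr p + norm (g2 x) powr p" .
        then show "norm (indicator S x * \<bar>h x\<bar>) \<le> norm (2 * indicator S x + norm (g1 x) powr p + norm (g2 x) powr p)"
          by (auto simp: indicator_def)
      qed
    qed
    have t: "(\<integral>x. h x * \<phi> x \<partial>lborel) = 0" if \<phi>: "test_fun \<phi>" for \<phi>
    proof -
      have a1: "integrable lborel (\<lambda>x. g1 x $ i * \<phi> x)" "(\<integral>x. u x * partial_deriv i \<phi> x \<partial>lborel) = - (\<integral>x. g1 x $ i * \<phi> x \<partial>lborel)"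
        using w1(1) \<phi> unfolding weak_gradient_def by auto
      have a2: "integrable lborel (\<lambda>x. g2 x $ i * \<phi> x)" "(\<integral>x. u x * partial_deriv i \<phi> x \<partial>lborel) = - (\<integral>x. g2 x $ i * \<phi> x \<partial>lborel)"
        using w2(1) \<phi> unfolding weak_gradient_def by auto
      have "(\<integral>x. h x * \<phi> x \<partial>lborel) = (\<integral>x. g1 x $ i * \<phi> x - g2 x $ i * \<phi> x \<partial>lborel)"
        unfolding h_def by (simp add: algebra_simps)
      also have "\<dots> = 0" using a1 a2 by simp
      finally show ?thesis .
    qed
    have boxes: "(\<integral>x. indicator (box a b) x * h x \<partial>lborel) = 0" for a b :: "real^'n"
    proof -
      have "emeasure lborel (cbox a b) < \<infinity>" by (rule emeasure_lborel_cbox_finite)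
      then show ?thesis by (intro box_test_zero[OF hm loc t]) auto
    qed
    define B where "B k = box (- (real k *\<^sub>R One)) (real k *\<^sub>R One :: real^'n)" for k :: nat
    have aek: "AE x in lborel. indicator (B k) x * h x = 0" for k
    proof (rule AE_zero_boxes)
      show "(\<lambda>x. indicator (B k) x * h x) \<in> borel_measurable borel" unfolding B_def by measurable
      have "integrable lborel (\<lambda>x. indicator (B k) x * \<bar>h x\<bar>)"
        by (rule loc) (auto simp: B_def emeasure_lborel_box_finite)
      then show "integrable lborel (\<lambda>x. indicator (B k) x * h x)"
        by (rule Bochner_Integration.integrable_bound) (auto simp: B_def indicator_def)
      fix a b :: "real^'n"
      have "(\<lambda>x. indicator (box a b) x * (indicator (B k) x * h x)) = (\<lambda>x. indicator (box a b \<inter> B k) x * h x)"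
        by (auto simp: indicator_def fun_eq_iff)
      also have "box a b \<inter> B k = box (\<Sum>i\<in>Basis. max (a \<bullet> i) ((- (real k *\<^sub>R One)) \<bullet> i) *\<^sub>R i)
          (\<Sum>i\<in>Basis. min (b \<bullet> i) ((real k *\<^sub>R One) \<bullet> i) *\<^sub>R i)"
        unfolding B_def by (rule box_Int_box)
      finally show "(\<integral>x. indicator (box a b) x * (indicator (B k) x * h x) \<partial>lborel) = 0"
        using boxes by simp
    qed
    then have "AE x in lborel. \<forall>k. indicator (B k) x * h x = 0"
      by (intro AE_all_countable[THEN iffD2]) blast
    then show ?thesis
    proof (rule eventually_mono)
      fix x assume a: "\<forall>k. indicator (B k) x * h x = 0"
      obtain k where "x \<in> B k" using UN_box_eq_UNIV unfolding B_def by blast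
      then show "g1 x $ i = g2 x $ i" using a[rule_format, of k] by (simp add: h_def)
    qed
  qed
  have "AE x in lborel. \<forall>i\<in>UNIV. g1 x $ i = g2 x $ i" by (rule AE_finite_allI) (use comp in auto)
  then show ?thesis by (rule eventually_mono) (simp add: vec_eq_iff)
qed

lemma gnorm_eq:
  fixes u :: "real^'n::finite \<Rightarrow> real" and g :: "real^'n \<Rightarrow> real^'n"
  assumes p: "1 \<le> p" and W: "W1p p u"
    and w: "weak_gradient u g" "g \<in> borel_measurable lborel" "integrable lborel (\<lambda>x. norm (g x) powr p)"
  shows "gnorm p u = (\<integral>x. norm (g x) powr p \<partial>lborel) powr (1 / p)"
proof -
  have ex: "\<exists>g. weak_gradient u g \<and> g \<in> borel_measurable lborel \<and> integrable lborel (\<lambda>x. norm (g x) powr p)"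
    using W unfolding W1p_def by blast
  have G: "weak_gradient u (grad p u) \<and> grad p u \<in> borel_measurable lborel \<and> integrable lborel (\<lambda>x. norm (grad p u x) powr p)"
    unfolding grad_def by (rule someI_ex[OF ex])
  have "AE x in lborel. grad p u x = g x" using G w by (intro weak_grad_unique[OF p]) auto
  then have "(\<integral>x. norm (grad p u x) powr p \<partial>lborel) = (\<integral>x. norm (g x) powr p \<partial>lborel)"
    by (intro integral_cong_AE) (use G w in auto)
  then show ?thesis unfolding gnorm_def by simp
qed


lemma partial_scale:
  fixes G :: "real^'n::finite \<Rightarrow> real"
  assumes "G differentiable (at (c *\<^sub>R x))"
  shows "partial_deriv i (\<lambda>x. K * G (c *\<^sub>R x)) x = K * c * partial_deriv i G (c *\<^sub>R x)"
proof -
  let ?e = "axis i (1::real) :: real^'n"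
  have d1: "((\<lambda>s. G (c *\<^sub>R x + s *\<^sub>R ?e)) has_real_derivative partial_deriv i G (c *\<^sub>R x)) (at (c * 0))"
    using line_deriv[OF assms, of i] by simp
  have d2: "((\<lambda>t. c * t) has_real_derivative c) (at 0)" by (auto intro!: derivative_eq_intros)
  have "((\<lambda>t. G (c *\<^sub>R x + (c * t) *\<^sub>R ?e)) has_real_derivative partial_deriv i G (c *\<^sub>R x) * c) (at 0)"
    using DERIV_chain2[OF d1 d2] by simp
  then have "((\<lambda>t. K * G (c *\<^sub>R (x + t *\<^sub>R ?e))) has_real_derivative K * (partial_deriv i G (c *\<^sub>R x) * c)) (at 0)"
    by (auto intro!: derivative_eq_intros simp: scaleR_add_right)
  then show ?thesis unfolding partial_deriv_def[of i "\<lambda>x. K * G (c *\<^sub>R x)"]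
    by (subst DERIV_imp_deriv) (auto simp: algebra_simps)
qed

lemma differentiable_scale:
  fixes G :: "real^'n::finite \<Rightarrow> real"
  assumes "G differentiable (at (c *\<^sub>R x))"
  shows "(\<lambda>x. K * G (c *\<^sub>R x)) differentiable (at x)"
proof -
  have "(\<lambda>x. c *\<^sub>R x) differentiable (at x)" by (auto intro!: derivative_intros)
  then have "(\<lambda>x. G (c *\<^sub>R x)) differentiable (at x)"
    using differentiable_chain_at[of "\<lambda>x. c *\<^sub>R x" x G] assms by (simp add: o_def)
  then show ?thesis by (auto intro: differentiable_mult)
qed

lemma iter_partial_scale:
  fixes \<phi> :: "real^'n::finite \<Rightarrow> real"
  assumes "smooth_fun \<phi>"
  shows "iter_partial is (\<lambda>x. \<phi> (c *\<^sub>R x)) = (\<lambda>x. c ^ length is * iter_partial is \<phi> (c *\<^sub>R x))"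
proof (induction "is")
  case Nil then show ?case by simp
next
  case (Cons i "is")
  have d: "iter_partial is \<phi> differentiable (at y)" for y using assms unfolding smooth_fun_def by blast
  show ?case
  proof
    fix x
    have "iter_partial (i # is) (\<lambda>x. \<phi> (c *\<^sub>R x)) x = partial_deriv i (\<lambda>x. c ^ length is * iter_partial is \<phi> (c *\<^sub>R x)) x"
      using Cons by simp
    also have "\<dots> = c ^ length is * c * partial_deriv i (iter_partial is \<phi>) (c *\<^sub>R x)"
      by (rule partial_scale[OF d])
    finally show "iter_partial (i # is) (\<lambda>x. \<phi> (c *\<^sub>R x)) x = c ^ length (i # is) * iter_partial (i # is) \<phi> (c *\<^sub>R x)"
      by (simp add: algebra_simps)
  qed
qed

lemma test_scale:
  fixes \<phi> :: "real^'n::finite \<Rightarrow> real"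
  assumes \<phi>: "test_fun \<phi>" and c: "c \<noteq> 0"
  shows "test_fun (\<lambda>x. \<phi> (c *\<^sub>R x))"
    "partial_deriv i (\<lambda>x. \<phi> (c *\<^sub>R x)) x = c * partial_deriv i \<phi> (c *\<^sub>R x)"
proof -
  have sm: "smooth_fun \<phi>" using \<phi> unfolding test_fun_def by simp
  show "partial_deriv i (\<lambda>x. \<phi> (c *\<^sub>R x)) x = c * partial_deriv i \<phi> (c *\<^sub>R x)"
    using iter_partial_scale[OF sm, of "[i]" c] by (simp add: fun_eq_iff)
  have "smooth_fun (\<lambda>x. \<phi> (c *\<^sub>R x))"
    unfolding smooth_fun_def iter_partial_scale[OF sm]
  proof (intro allI)
    fix "is" :: "'n list" and x :: "real^'n"
    have "iter_partial is \<phi> differentiable (at (c *\<^sub>R x))" using sm unfolding smooth_fun_def by blast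
    then show "(\<lambda>x. c ^ length is * iter_partial is \<phi> (c *\<^sub>R x)) differentiable at x"
      by (rule differentiable_scale)
  qed
  moreover have "compact (closure {x. \<phi> (c *\<^sub>R x) \<noteq> 0})"
  proof -
    have "{x. \<phi> (c *\<^sub>R x) \<noteq> 0} = (*\<^sub>R) (inverse c) ` {y. \<phi> y \<noteq> 0}"
      using c by (auto simp: image_iff intro!: exI[of _ "c *\<^sub>R _"])
    then have "closure {x. \<phi> (c *\<^sub>R x) \<noteq> 0} = (*\<^sub>R) (inverse c) ` closure {y. \<phi> y \<noteq> 0}"
      by (simp add: closure_scaleR)
    moreover have "compact ((*\<^sub>R) (inverse c) ` closure {y. \<phi> y \<noteq> 0})"
      using \<phi> unfolding test_fun_def by (intro compact_continuous_image continuous_intros) auto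
    ultimately show ?thesis by simp
  qed
  ultimately show "test_fun (\<lambda>x. \<phi> (c *\<^sub>R x))" unfolding test_fun_def by simp
qed


lemma cv_scale:
  fixes f :: "real^'n::finite \<Rightarrow> real"
  assumes f: "f \<in> borel_measurable borel" and s: "0 < s"
  shows "integrable lborel (\<lambda>x. f (s *\<^sub>R x)) \<longleftrightarrow> integrable lborel f"
    "(\<integral>x. f (s *\<^sub>R x) \<partial>lborel) = (\<integral>x. f x \<partial>lborel) / s powr real CARD('n)"
proof -
  show "integrable lborel (\<lambda>x. f (s *\<^sub>R x)) \<longleftrightarrow> integrable lborel f"
    using lborel_affine_integral(1)[OF f, of s 0] s by simp
  have "(\<integral>x. f x \<partial>lborel) = s ^ CARD('n) * (\<integral>x. f (s *\<^sub>R x) \<partial>lborel)"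
    using lborel_affine_integral(2)[OF f, of s 0] s by simp
  moreover have "s ^ CARD('n) = s powr real CARD('n)" using s by (simp add: powr_realpow)
  ultimately show "(\<integral>x. f (s *\<^sub>R x) \<partial>lborel) = (\<integral>x. f x \<partial>lborel) / s powr real CARD('n)"
    using s by simp
qed

lemma grad_props:
  assumes "W1p p u"
  shows "weak_gradient u (grad p u)" "grad p u \<in> borel_measurable lborel"
    "integrable lborel (\<lambda>x. norm (grad p u x) powr p)"
proof -
  have ex: "\<exists>g. weak_gradient u g \<and> g \<in> borel_measurable lborel \<and> integrable lborel (\<lambda>x. norm (g x) powr p)"
    using assms unfolding W1p_def by blast
  have G: "weak_gradient u (grad p u) \<and> grad p u \<in> borel_measurable lborel \<and> integrable lborel (\<lambda>x. norm (grad p u x) powr p)"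
    unfolding grad_def by (rule someI_ex[OF ex])
  then show "weak_gradient u (grad p u)" "grad p u \<in> borel_measurable lborel"
    "integrable lborel (\<lambda>x. norm (grad p u x) powr p)" by auto
qed

lemma dil_W1p:
  fixes u :: "real^'n::finite \<Rightarrow> real"
  assumes p: "1 \<le> p" and s: "0 < s" and W: "W1p p u"
  defines "v \<equiv> (\<lambda>x. s powr (real CARD('n) / p) * u (s *\<^sub>R x))"
  shows "W1p p v" "gnorm p v = s * gnorm p u"
    "\<And>r. 0 < r \<Longrightarrow> Lnorm r v powr r = s powr (real CARD('n) * (r - p) / p) * Lnorm r u powr r"
proof -
  define N where "N = real CARD('n)"
  define K where "K = s powr (N / p)"
  have K0: "0 < K" unfolding K_def using s by simp
  have p0: "0 < p" using p by simp
  let ?g = "grad p u"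
  note gp = grad_props[OF W]
  have um[measurable]: "u \<in> borel_measurable borel" using W unfolding W1p_def in_Lp_def by simp
  have gm[measurable]: "?g \<in> borel_measurable borel" using gp(2) by simp
  have pr[measurable]: "(\<lambda>v::real^'n. v $ i) \<in> borel_measurable borel" for i
    by (intro borel_measurable_continuous_onI continuous_intros)
  have gim[measurable]: "(\<lambda>x. ?g x $ i) \<in> borel_measurable borel" for i
    using measurable_compose[OF gm pr] by (simp add: o_def)
  define G where "G x = (K * s) *\<^sub>R ?g (s *\<^sub>R x)" for x
  have v_eq: "v = (\<lambda>x. K * u (s *\<^sub>R x))" unfolding v_def K_def N_def ..
  have sN: "s powr N / s powr N = 1" using s by simp
  have wg: "weak_gradient v G"
    unfolding weak_gradient_def
  proof (intro allI impI)
    fix \<phi> :: "real^'n \<Rightarrow> real" and i assume \<phi>: "test_fun \<phi>"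
    define \<psi> where "\<psi> y = \<phi> (inverse s *\<^sub>R y)" for y
    have \<psi>: "test_fun \<psi>" unfolding \<psi>_def[abs_def] using test_scale(1)[OF \<phi>] s by simp
    have d\<psi>: "partial_deriv i \<psi> y = inverse s * partial_deriv i \<phi> (inverse s *\<^sub>R y)" for y
      unfolding \<psi>_def[abs_def] using test_scale(2)[OF \<phi>] s by simp
    have [measurable]: "\<psi> \<in> borel_measurable borel" "partial_deriv i \<psi> \<in> borel_measurable borel"
      using test_cont[OF \<psi>] test_pcont[OF \<psi>] by (auto intro: borel_measurable_continuous_onI)
    have wu: "integrable lborel (\<lambda>y. u y * partial_deriv i \<psi> y)" "integrable lborel (\<lambda>y. ?g y $ i * \<psi> y)"
      "(\<integral>y. u y * partial_deriv i \<psi> y \<partial>lborel) = - (\<integral>y. ?g y $ i * \<psi> y \<partial>lborel)"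
      using gp(1) \<psi> unfolding weak_gradient_def by auto
    have e1: "v x * partial_deriv i \<phi> x = K * s * (u (s *\<^sub>R x) * partial_deriv i \<psi> (s *\<^sub>R x))" for x
      unfolding v_eq d\<psi> using s by simp
    have e2: "G x $ i * \<phi> x = K * s * (?g (s *\<^sub>R x) $ i * \<psi> (s *\<^sub>R x))" for x
      unfolding G_def \<psi>_def using s by simp
    have m1: "(\<lambda>y. u y * partial_deriv i \<psi> y) \<in> borel_measurable borel" by measurable
    have m2: "(\<lambda>y. ?g y $ i * \<psi> y) \<in> borel_measurable borel" by measurable
    have i1: "integrable lborel (\<lambda>x. u (s *\<^sub>R x) * partial_deriv i \<psi> (s *\<^sub>R x))"
      using cv_scale(1)[OF m1 s] wu(1) by simp
    have i2: "integrable lborel (\<lambda>x. ?g (s *\<^sub>R x) $ i * \<psi> (s *\<^sub>R x))"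
      using cv_scale(1)[OF m2 s] wu(2) by simp
    show "integrable lborel (\<lambda>x. v x * partial_deriv i \<phi> x) \<and> integrable lborel (\<lambda>x. G x $ i * \<phi> x) \<and>
        (\<integral>x. v x * partial_deriv i \<phi> x \<partial>lborel) = - (\<integral>x. G x $ i * \<phi> x \<partial>lborel)"
      unfolding e1 e2 using i1 i2 cv_scale(2)[OF m1 s] cv_scale(2)[OF m2 s] wu(3) by simp
  qed
  have Gm: "G \<in> borel_measurable lborel" unfolding G_def by simp
  have nG: "norm (G x) powr p = s powr N * s powr p * norm (?g (s *\<^sub>R x)) powr p" for x
  proof -
    have "norm (G x) powr p = (K * s) powr p * norm (?g (s *\<^sub>R x)) powr p"
      unfolding G_def using K0 s by (simp add: powr_mult)
    also have "(K * s) powr p = s powr N * s powr p"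
      unfolding K_def using s p0 by (simp add: powr_mult powr_powr)
    finally show ?thesis by simp
  qed
  have mng: "(\<lambda>y. norm (?g y) powr p) \<in> borel_measurable borel" by measurable
  have iG: "integrable lborel (\<lambda>x. norm (G x) powr p)"
    unfolding nG using cv_scale(1)[OF mng s] gp(3) by simp
  have av: "\<bar>v x\<bar> powr r = s powr (N * r / p) * \<bar>u (s *\<^sub>R x)\<bar> powr r" if "0 < r" for x r
    unfolding v_eq K_def using s that by (simp add: abs_mult powr_mult powr_powr)
  have mur: "(\<lambda>y. \<bar>u y\<bar> powr r) \<in> borel_measurable borel" for r by measurable
  have "in_Lp p v"
    unfolding in_Lp_def
  proof
    show "v \<in> borel_measurable lborel" unfolding v_eq by simp
    show "integrable lborel (\<lambda>x. \<bar>v x\<bar> powr p)"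
      unfolding av[OF p0] using cv_scale(1)[OF mur s] W unfolding W1p_def in_Lp_def by simp
  qed
  then show W1p: "W1p p v" unfolding W1p_def using wg Gm iG by blast
  have "gnorm p v = (\<integral>x. norm (G x) powr p \<partial>lborel) powr (1 / p)"
    by (rule gnorm_eq[OF p W1p wg Gm iG])
  also have "(\<integral>x. norm (G x) powr p \<partial>lborel) = s powr p * (\<integral>x. norm (?g x) powr p \<partial>lborel)"
  proof -
    have "(\<integral>x. norm (G x) powr p \<partial>lborel) = s powr N * s powr p * ((\<integral>x. norm (?g x) powr p \<partial>lborel) / s powr N)"
      unfolding nG using cv_scale(2)[OF mng s] by (simp add: N_def)
    then show ?thesis using s by simp
  qed
  also have "(s powr p * (\<integral>x. norm (?g x) powr p \<partial>lborel)) powr (1 / p) = s * gnorm p u"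
    unfolding gnorm_def using s p0 by (simp add: powr_mult powr_powr integral_nonneg)
  finally show "gnorm p v = s * gnorm p u" .
  fix r :: real assume r: "0 < r"
  have "Lnorm r v powr r = (\<integral>x. \<bar>v x\<bar> powr r \<partial>lborel)" by (rule Lnorm_powr[OF r])
  also have "\<dots> = s powr (N * r / p) * ((\<integral>x. \<bar>u x\<bar> powr r \<partial>lborel) / s powr N)"
    unfolding av[OF r] using cv_scale(2)[OF mur s] by (simp add: N_def)
  also have "\<dots> = s powr (N * (r - p) / p) * (\<integral>x. \<bar>u x\<bar> powr r \<partial>lborel)"
  proof -
    have eq: "s powr (N * r / p) / s powr N = s powr (N * (r - p) / p)"
      using s p0 by (simp add: powr_diff[symmetric] field_simps)
    have "s powr (N * r / p) * ((\<integral>x. \<bar>u x\<bar> powr r \<partial>lborel) / s powr N)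
        = (s powr (N * r / p) / s powr N) * (\<integral>x. \<bar>u x\<bar> powr r \<partial>lborel)" by simp
    then show ?thesis by (simp only: eq)
  qed
  also have "(\<integral>x. \<bar>u x\<bar> powr r \<partial>lborel) = Lnorm r u powr r" by (rule Lnorm_powr[OF r, symmetric])
  finally show "Lnorm r v powr r = s powr (real CARD('n) * (r - p) / p) * Lnorm r u powr r"
    by (simp add: N_def)
qed


lemma young0:
  fixes x y l :: real
  assumes "0 \<le> x" "0 \<le> y" "0 \<le> l" "l \<le> 1"
  shows "x powr l * y powr (1 - l) \<le> l * x + (1 - l) * y"
proof (cases "x = 0 \<or> y = 0")
  case True
  then show ?thesis using assms by (auto intro: add_nonneg_nonneg mult_nonneg_nonneg)
next
  case False
  then show ?thesis using Youngs_inequality_0[of l "1 - l" x y] assms by auto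
qed

lemma holder2:
  fixes f g :: "'a \<Rightarrow> real"
  assumes fm[measurable]: "f \<in> borel_measurable M" and gm[measurable]: "g \<in> borel_measurable M"
    and f0: "\<And>x. 0 \<le> f x" and g0: "\<And>x. 0 \<le> g x"
    and fi: "integrable M f" and gi: "integrable M g" and l: "0 < l" "l < 1"
  shows "integrable M (\<lambda>x. f x powr l * g x powr (1 - l))"
    "(\<integral>x. f x powr l * g x powr (1 - l) \<partial>M) \<le> (\<integral>x. f x \<partial>M) powr l * (\<integral>x. g x \<partial>M) powr (1 - l)"
proof -
  have hm[measurable]: "(\<lambda>x. f x powr l * g x powr (1 - l)) \<in> borel_measurable M" by measurable
  have yb: "f x powr l * g x powr (1 - l) \<le> l * f x + (1 - l) * g x" for x
    using young0[OF f0 g0, of l] l by simp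
  show hi: "integrable M (\<lambda>x. f x powr l * g x powr (1 - l))"
  proof (rule Bochner_Integration.integrable_bound)
    show "integrable M (\<lambda>x. l * f x + (1 - l) * g x)" using fi gi by auto
    show "AE x in M. norm (f x powr l * g x powr (1 - l)) \<le> norm (l * f x + (1 - l) * g x)"
      using yb f0 g0 l by (intro AE_I2) (auto intro!: add_nonneg_nonneg)
  qed simp
  define F where "F = (\<integral>x. f x \<partial>M)"
  define G where "G = (\<integral>x. g x \<partial>M)"
  have F0: "0 \<le> F" unfolding F_def using f0 by (simp add: integral_nonneg)
  have G0: "0 \<le> G" unfolding G_def using g0 by (simp add: integral_nonneg)
  show "(\<integral>x. f x powr l * g x powr (1 - l) \<partial>M) \<le> F powr l * G powr (1 - l)"
  proof (cases "F = 0 \<or> G = 0")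
    case True
    then have "(AE x in M. f x = 0) \<or> (AE x in M. g x = 0)"
      using integral_nonneg_eq_0_iff_AE[OF fi] integral_nonneg_eq_0_iff_AE[OF gi] f0 g0
      unfolding F_def G_def by auto
    then have "AE x in M. f x powr l * g x powr (1 - l) = 0"
      by (auto elim!: eventually_mono)
    then have "(\<integral>x. f x powr l * g x powr (1 - l) \<partial>M) = 0"
      by (simp add: integral_eq_zero_AE)
    then show ?thesis by simp
  next
    case False
    then have Fp: "0 < F" and Gp: "0 < G" using F0 G0 by auto
    have pw: "(f x / F) powr l * (g x / G) powr (1 - l) \<le> l * (f x / F) + (1 - l) * (g x / G)" for x
      using young0[of "f x / F" "g x / G" l] f0 g0 Fp Gp l by simp
    have eq: "(f x / F) powr l * (g x / G) powr (1 - l) = (f x powr l * g x powr (1 - l)) / (F powr l * G powr (1 - l))" for x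
      using f0 g0 Fp Gp by (simp add: powr_divide)
    have "(\<integral>x. (f x powr l * g x powr (1 - l)) / (F powr l * G powr (1 - l)) \<partial>M)
        \<le> (\<integral>x. l * (f x / F) + (1 - l) * (g x / G) \<partial>M)"
      using pw hi fi gi unfolding eq by (intro integral_mono) auto
    also have "\<dots> = l * (F / F) + (1 - l) * (G / G)"
      using fi gi unfolding F_def G_def by simp
    also have "\<dots> = 1" using Fp Gp by simp
    finally have "(\<integral>x. f x powr l * g x powr (1 - l) \<partial>M) / (F powr l * G powr (1 - l)) \<le> 1"
      by simp
    moreover have "0 < F powr l * G powr (1 - l)" using Fp Gp by simp
    ultimately show ?thesis by (simp add: divide_le_eq)
  qed
qed


lemma exps:
  fixes p q :: real and N :: real
  assumes "2 \<le> N" "1 < p" "p < N" "p < q" "q < p + p\<^sup>2 / N"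
  shows "0 < q * (N * (q - p) / (p * q))" "q * (N * (q - p) / (p * q)) < p"
    "p < N * p / (N - p)" "q * (N * (q - p) / (p * q)) = N * (q - p) / p"
    "0 < N * (q - p) / (p * q)"
proof -
  show e: "q * (N * (q - p) / (p * q)) = N * (q - p) / p" using assms by (simp add: field_simps)
  show "0 < q * (N * (q - p) / (p * q))" unfolding e using assms by simp
  show "0 < N * (q - p) / (p * q)" using assms by simp
  have "q - p < p\<^sup>2 / N" using assms by simp
  then have "N * (q - p) < p\<^sup>2" using assms by (simp add: less_divide_eq mult.commute)
  then show "q * (N * (q - p) / (p * q)) < p" unfolding e using assms
    by (simp add: divide_less_eq power2_eq_square)
  show "p < N * p / (N - p)" using assms by (simp add: less_divide_eq algebra_simps)
qed

lemma energy_eq: "energy T p q \<mu> u = 1 / p * gnorm p u powr p - \<mu> / q * Lnorm q u powr q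
    - 1 / crit_exp CARD('n) p * Lnorm (crit_exp CARD('n) p) u powr crit_exp CARD('n) p"
  for T :: "'n::finite itself"
  by (simp add: energy_def Let_def)

lemma pohozaev_eq: "pohozaev T p q \<mu> u = gnorm p u powr p - \<mu> * gamma_q CARD('n) p q * Lnorm q u powr q
    - Lnorm (crit_exp CARD('n) p) u powr crit_exp CARD('n) p"
  for T :: "'n::finite itself"
  by (simp add: pohozaev_def Let_def)

lemma pohozaev_second_eq: "pohozaev_second T p q \<mu> u = p * gnorm p u powr p
    - \<mu> * q * (gamma_q CARD('n) p q)\<^sup>2 * Lnorm q u powr q
    - crit_exp CARD('n) p * Lnorm (crit_exp CARD('n) p) u powr crit_exp CARD('n) p"
  for T :: "'n::finite itself"
  by (simp add: pohozaev_second_def Let_def)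

lemma h_fun_eq: "h_fun T p q a \<mu> t = 1 / p * t powr p
   - \<mu> / q * GN_const T p q * a powr (q * (1 - gamma_q CARD('n) p q)) * t powr (q * gamma_q CARD('n) p q)
   - 1 / (crit_exp CARD('n) p * sobolev_const T p powr (crit_exp CARD('n) p / p)) * t powr crit_exp CARD('n) p"
  for T :: "'n::finite itself"
  by (simp add: h_fun_def Let_def)


theorem main_abstract:
  fixes p q a \<mu> ps g S C :: real
  assumes N2: "CARD('n::finite) \<ge> 2"
    and p1: "1 < p" and pN: "p < real CARD('n)"
    and pq: "p < q" and qlt: "q < p + p\<^sup>2 / real CARD('n)"
    and a0: "a > 0" and mu0: "\<mu> > 0"
    and hyp: "\<mu> * a powr (q * (1 - gamma_q CARD('n) p q)) < alpha_const TYPE('n) p q"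
    and ps_def: "ps = crit_exp CARD('n) p" and g_def: "g = gamma_q CARD('n) p q"
    and S_def: "S = sobolev_const TYPE('n) p" and C_def: "C = GN_const TYPE('n) p q"
    and Spos: "0 < S" and Cpos: "0 < C"
    and F1: "\<And>u. u \<in> Sa TYPE('n) p a \<Longrightarrow> 0 < gnorm p u \<and> 0 < Lnorm ps u powr ps \<and> 0 < Lnorm q u powr q"
    and F2: "\<And>u. u \<in> Sa TYPE('n) p a \<Longrightarrow> Lnorm q u powr q \<le> C * gnorm p u powr (q * g) * a powr (q * (1 - g))"
    and F3: "\<And>u. u \<in> Sa TYPE('n) p a \<Longrightarrow> Lnorm ps u powr ps \<le> gnorm p u powr ps / S powr (ps / p)"
    and F4: "\<And>u s. u \<in> Sa TYPE('n) p a \<Longrightarrow> 0 < s \<Longrightarrow> \<exists>v\<in>Sa TYPE('n) p a. gnorm p v = s * gnorm p u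
       \<and> Lnorm q v powr q = s powr (q * g) * Lnorm q u powr q \<and> Lnorm ps v powr ps = s powr ps * Lnorm ps u powr ps"
    and F5: "Sa TYPE('n) p a \<noteq> {}"
  shows "m_plus TYPE('n) p q a \<mu> =
           Inf (energy TYPE('n) p q \<mu> ` A_R TYPE('n) p a (R0 TYPE('n) p q a \<mu>))
         \<and> m_plus TYPE('n) p q a \<mu> < 0 \<and> 0 < m_minus TYPE('n) p q a \<mu>"
proof -
  define N where "N = real CARD('n)"
  have N2': "2 \<le> N" using N2 unfolding N_def by simp
  have ps_eq: "ps = N * p / (N - p)" unfolding ps_def crit_exp_def N_def ..
  have g_eq: "g = N * (q - p) / (p * q)" unfolding g_def gamma_q_def N_def ..
  have qg0: "0 < q * g" and qgp: "q * g < p" and pps: "p < ps" and g0: "0 < g"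
    using exps[OF N2' p1 pN[folded N_def] pq qlt[folded N_def]] unfolding ps_eq g_eq by auto
  have p0: "0 < p" using p1 by simp
  have q0: "0 < q" using p1 pq by simp
  define T where "T = (TYPE('n))"
  define E where "E = energy TYPE('n) p q \<mu>"
  define K where "K = \<mu> / q * C * a powr (q * (1 - g))"
  define L where "L = 1 / (ps * S powr (ps / p))"
  define h where "h = h_fun TYPE('n) p q a \<mu>"
  have K0: "0 < K" unfolding K_def using mu0 q0 Cpos a0 by simp
  have L0: "0 < L" unfolding L_def using Spos pps p0 by simp
  have h_eq: "h t = 1 / p * t powr p - K * t powr (q * g) - L * t powr ps" for t
    unfolding h_def h_fun_eq K_def L_def ps_def[symmetric] g_def[symmetric] C_def[symmetric] S_def[symmetric]
    by simp
  interpret H: fib p "q * g" ps "1 / p" K L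
    using qg0 qgp pps p0 K0 L0 by unfold_locales auto
  have hk: "h t = t powr (q * g) * (H.k t - K)" if "0 < t" for t
  proof -
    have "t powr (q * g) * t powr (p - q * g) = t powr p"
      "t powr (q * g) * t powr (ps - q * g) = t powr ps"
      using that by (simp_all add: powr_add[symmetric])
    then show ?thesis unfolding h_eq H.k_def by (simp add: algebra_simps)
  qed

  define X where "X = ps * S powr (ps / p) * (p - q * g) / (p * (ps - q * g))"
  define C1 where "C1 = X powr ((p - q * g) / (ps - p)) * (q * (ps - p)) / (p * C * (ps - q * g))"
  have X0: "0 < X" unfolding X_def using pps qgp p0 Spos by simp
  have "alpha_const TYPE('n) p q \<le> C1"
    unfolding alpha_const_def Let_def C1_def X_def ps_def g_def S_def C_def by simp
  then have muC1: "\<mu> * a powr (q * (1 - g)) < C1" using hyp unfolding g_def by simp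
  have s0X: "H.s0 = X powr (1 / (ps - p))"
  proof -
    have "(p - q * g) * (1 / p) / ((ps - q * g) * L) = X"
      unfolding X_def L_def using pps qgp p0 Spos by (simp add: field_simps)
    then show ?thesis unfolding H.s0_def by simp
  qed
  have s0a: "H.s0 powr (p - q * g) = X powr ((p - q * g) / (ps - p))"
    unfolding s0X using X0 by (simp add: powr_powr)
  have s0b: "H.s0 powr (ps - q * g) = H.s0 powr (p - q * g) * X"
  proof -
    have "H.s0 powr (ps - q * g) = H.s0 powr (p - q * g) * H.s0 powr (ps - p)"
      using H.s0_pos by (simp add: powr_add[symmetric])
    moreover have "H.s0 powr (ps - p) = X" unfolding s0X using X0 pps by (simp add: powr_powr)
    ultimately show ?thesis by simp
  qed
  have ks0_eq: "H.k H.s0 = C1 * C / q"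
  proof -
    have "H.k H.s0 = H.s0 powr (p - q * g) * (1 / p - L * X)"
      unfolding H.k_def s0b by (simp add: algebra_simps)
    also have "1 / p - L * X = (ps - p) / (p * (ps - q * g))"
      unfolding L_def X_def using pps qgp p0 Spos by (simp add: field_simps)
    finally have "H.k H.s0 = X powr ((p - q * g) / (ps - p)) * ((ps - p) / (p * (ps - q * g)))"
      unfolding s0a .
    moreover have "ps - q * g \<noteq> 0" using pps qgp by simp
    moreover have "C1 * C / q = X powr ((p - q * g) / (ps - p)) * ((ps - p) / (p * (ps - q * g)))"
      unfolding C1_def using Cpos q0 p0 \<open>ps - q * g \<noteq> 0\<close> by (simp add: field_simps)
    ultimately show ?thesis by simp
  qed
  have Kks0: "K < H.k H.s0"
  proof -
    have "K = \<mu> * a powr (q * (1 - g)) * C / q" unfolding K_def by simp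
    also have "\<dots> < C1 * C / q" using muC1 Cpos q0 by (simp add: divide_strict_right_mono)
    finally show ?thesis using ks0_eq by simp
  qed
  define tm where "tm = H.s0"
  have tm0: "0 < tm" unfolding tm_def by (rule H.s0_pos)
  have htm: "0 < h tm" using hk[OF tm0] Kks0 tm0 unfolding tm_def by simp
  obtain r0 where r0: "0 < r0" "r0 < H.s0" "H.k r0 = K"
  proof -
    have "\<exists>x. 0 \<le> x \<and> x \<le> H.s0 \<and> H.k x = K"
      using Kks0 K0 H.s0_pos H.k0
      by (intro IVT') (auto intro: continuous_on_subset[OF H.k_cont])
    then obtain x where x: "0 \<le> x" "x \<le> H.s0" "H.k x = K" by blast
    have "x \<noteq> 0" using x H.k0 K0 by auto
    moreover have "x \<noteq> H.s0" using x Kks0 by auto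
    ultimately show ?thesis using x by (intro that[of x]) auto
  qed
  have R0_eq: "R0 TYPE('n) p q a \<mu> = r0"
  proof -
    have "Inf {t. t > 0 \<and> h t = 0} = r0"
    proof (rule cInf_eq_minimum)
      show "r0 \<in> {t. 0 < t \<and> h t = 0}" using r0 hk[OF r0(1)] by simp
      fix z assume z: "z \<in> {t. 0 < t \<and> h t = 0}"
      show "r0 \<le> z"
      proof (rule ccontr)
        assume "\<not> r0 \<le> z"
        then have "H.k z < H.k r0" using z r0 by (intro H.k_up) auto
        then have "h z < 0" using hk[of z] z r0 by (simp add: mult_pos_neg)
        then show False using z by simp
      qed
    qed
    then show ?thesis unfolding R0_def h_def .
  qed
  have hR0: "h r0 = 0" using hk[OF r0(1)] r0 by simp

  define GA where "GA u = gnorm p u powr p" for u :: "real^'n \<Rightarrow> real"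
  define GB where "GB u = Lnorm q u powr q" for u :: "real^'n \<Rightarrow> real"
  define GD where "GD u = Lnorm ps u powr ps" for u :: "real^'n \<Rightarrow> real"
  define Ph where "Ph u = fPhi p (q * g) ps (GA u) (\<mu> * g * GB u) (GD u)" for u :: "real^'n \<Rightarrow> real"
  define kk where "kk u = fk p (q * g) ps (GA u) (GD u)" for u :: "real^'n \<Rightarrow> real"
  define ss where "ss u = fs0 p (q * g) ps (GA u) (GD u)" for u :: "real^'n \<Rightarrow> real"
  define Sa' where "Sa' = Sa TYPE('n) p a"
  define Po where "Po = pohozaev TYPE('n) p q \<mu>"
  define Se where "Se = pohozaev_second TYPE('n) p q \<mu>"
  have fibu: "fib p (q * g) ps (GA u) (\<mu> * g * GB u) (GD u)" if "u \<in> Sa'" for u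
    using F1[OF that[unfolded Sa'_def]] qg0 qgp pps mu0 g0 unfolding GA_def GB_def GD_def
    by unfold_locales auto
  have Eu: "E u = Ph u 1" for u
    unfolding E_def Ph_def energy_eq fPhi_def GA_def GB_def GD_def ps_def[symmetric]
    using g0 q0 by simp
  have Pou: "Po u = kk u 1 - \<mu> * g * GB u" for u
    unfolding Po_def pohozaev_eq kk_def fk_def GA_def GB_def GD_def ps_def[symmetric] g_def[symmetric]
    by simp
  have Seu: "Se u = p * GA u - q * g * (\<mu> * g * GB u) - ps * GD u" for u
    unfolding Se_def pohozaev_second_eq GA_def GB_def GD_def ps_def[symmetric] g_def[symmetric]
    by (simp add: power2_eq_square algebra_simps)
  have Phi_ge_h: "h (s * gnorm p u) \<le> Ph u s" if u: "u \<in> Sa'" and s: "0 \<le> s" for u s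
  proof -
    let ?G = "gnorm p u"
    have G0: "0 < ?G" using F1 u unfolding Sa'_def by blast
    have t1: "(s * ?G) powr p = s powr p * GA u" unfolding GA_def using s G0 by (simp add: powr_mult)
    have t2: "\<mu> / q * GB u * s powr (q * g) \<le> K * (s * ?G) powr (q * g)"
    proof -
      have "GB u \<le> C * ?G powr (q * g) * a powr (q * (1 - g))" using F2 u unfolding GB_def Sa'_def by blast
      then have "\<mu> / q * GB u * s powr (q * g) \<le> \<mu> / q * (C * ?G powr (q * g) * a powr (q * (1 - g))) * s powr (q * g)"
        using mu0 q0 by (intro mult_right_mono mult_left_mono) auto
      also have "\<dots> = K * (s * ?G) powr (q * g)" unfolding K_def using s G0 by (simp add: powr_mult)
      finally show ?thesis .
    qed
    have t3: "GD u / ps * s powr ps \<le> L * (s * ?G) powr ps"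
    proof -
      have "GD u \<le> ?G powr ps / S powr (ps / p)" using F3 u unfolding GD_def Sa'_def by blast
      then have "GD u / ps * s powr ps \<le> ?G powr ps / S powr (ps / p) / ps * s powr ps"
        using pps p0 by (intro mult_right_mono divide_right_mono) auto
      also have "\<dots> = L * (s * ?G) powr ps" unfolding L_def using s G0 by (simp add: powr_mult mult.commute)
      finally show ?thesis .
    qed
    have "Ph u s = GA u / p * s powr p - \<mu> / q * GB u * s powr (q * g) - GD u / ps * s powr ps"
      unfolding Ph_def fPhi_def using g0 q0 by simp
    then show ?thesis unfolding h_eq t1 using t2 t3 by (simp add: algebra_simps)
  qed
  have dil: "\<exists>v\<in>Sa'. gnorm p v = s * gnorm p u \<and> E v = Ph u s \<and> Po v = s powr (q * g) * (kk u s - \<mu> * g * GB u)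
      \<and> Se v = p * GA u * s powr p - q * g * (\<mu> * g * GB u) * s powr (q * g) - ps * GD u * s powr ps"
    if u: "u \<in> Sa'" and s: "0 < s" for u s
  proof -
    obtain v where v: "v \<in> Sa'" "gnorm p v = s * gnorm p u" "GB v = s powr (q * g) * GB u"
      "GD v = s powr ps * GD u"
      using F4[OF u[unfolded Sa'_def] s] unfolding Sa'_def GB_def GD_def by blast
    have G0: "0 < gnorm p u" using F1 u unfolding Sa'_def by blast
    have GAv: "GA v = s powr p * GA u" unfolding GA_def v(2) using s G0 by (simp add: powr_mult)
    have e1: "s powr (q * g) * s powr (p - q * g) = s powr p"
      "s powr (q * g) * s powr (ps - q * g) = s powr ps"
      using s by (simp_all add: powr_add[symmetric])
    show ?thesis
    proof (intro bexI[OF _ v(1)] conjI)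
      show "gnorm p v = s * gnorm p u" by (rule v(2))
      show "E v = Ph u s" unfolding Eu Ph_def fPhi_def GAv v(3) v(4) by (simp add: algebra_simps)
      show "Po v = s powr (q * g) * (kk u s - \<mu> * g * GB u)"
        unfolding Pou kk_def fk_def GAv v(3) v(4)
        by (simp add: algebra_simps e1[symmetric])
      show "Se v = p * GA u * s powr p - q * g * (\<mu> * g * GB u) * s powr (q * g) - ps * GD u * s powr ps"
        unfolding Seu GAv v(3) v(4) by (simp add: algebra_simps)
    qed
  qed

  have Gpos: "0 < gnorm p u" if "u \<in> Sa'" for u using F1 that unfolding Sa'_def by blast
  have GBpos: "0 < GB u" if "u \<in> Sa'" for u using F1 that unfolding Sa'_def GB_def by blast
  have k1: "kk u 1 = GA u - GD u" for u unfolding kk_def fk_def by simp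
  have Se_at: "Se w = s powr p * ((p - q * g) * GA u - (ps - q * g) * GD u * s powr (ps - p))"
    if "Se w = p * GA u * s powr p - q * g * (\<mu> * g * GB u) * s powr (q * g) - ps * GD u * s powr ps"
       "kk u s = \<mu> * g * GB u" "0 < s" for w u s
  proof -
    have Meq: "(\<mu> * g * GB u) * s powr (q * g) = GA u * s powr p - GD u * s powr ps"
      unfolding that(2)[symmetric] kk_def fk_def using \<open>0 < s\<close>
      by (simp add: algebra_simps powr_add[symmetric])
    have Meq': "q * g * (\<mu> * g * GB u) * s powr (q * g) = q * g * (GA u * s powr p - GD u * s powr ps)"
      using Meq by (metis mult.assoc)
    have "s powr ps = s powr p * s powr (ps - p)" using \<open>0 < s\<close> by (simp add: powr_add[symmetric])
    then show ?thesis unfolding that(1) Meq' by (simp add: algebra_simps)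
  qed
  have Pp_prop: "u \<in> Sa' \<and> gnorm p u < r0 \<and> E u < 0" if u: "u \<in> P_plus TYPE('n) p q a \<mu>" for u
  proof -
    have uS: "u \<in> Sa'" and P0: "Po u = 0" and S0: "Se u > 0"
      using u unfolding P_plus_def Sa'_def Po_def Se_def by auto
    note F = fibu[OF uS]
    have kM: "kk u 1 = \<mu> * g * GB u" using P0 Pou by simp
    have "(ps - q * g) * GD u * 1 powr (ps - p) < (p - q * g) * GA u"
      using S0 unfolding Seu using kM[unfolded k1] by (simp add: algebra_simps)
    then have s01: "1 < ss u" using fib.kp_pos_iff[OF F, of 1] unfolding ss_def by simp
    have neg: "Ph u s < 0" if "0 < s" "s \<le> 1" for s
      using fib.L_plus[OF F _ _ that] kM s01 unfolding Ph_def kk_def ss_def by simp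
    have "gnorm p u < r0"
    proof (rule ccontr)
      assume "\<not> gnorm p u < r0"
      then have s: "0 < r0 / gnorm p u" "r0 / gnorm p u \<le> 1" using r0 Gpos[OF uS] by auto
      have "h (r0 / gnorm p u * gnorm p u) \<le> Ph u (r0 / gnorm p u)"
        using Phi_ge_h[OF uS, of "r0 / gnorm p u"] s by simp
      then have "0 \<le> Ph u (r0 / gnorm p u)" using hR0 Gpos[OF uS] by simp
      then show False using neg[OF s] by simp
    qed
    then show ?thesis using uS neg[of 1] Eu by simp
  qed
  have Pm_prop: "h tm \<le> E u" if u: "u \<in> P_minus TYPE('n) p q a \<mu>" for u
  proof -
    have uS: "u \<in> Sa'" and P0: "Po u = 0" and S0: "Se u < 0"
      using u unfolding P_minus_def Sa'_def Po_def Se_def by auto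
    note F = fibu[OF uS]
    have kM: "kk u 1 = \<mu> * g * GB u" using P0 Pou by simp
    have "(p - q * g) * GA u < (ps - q * g) * GD u * 1 powr (ps - p)"
      using S0 unfolding Seu using kM[unfolded k1] by (simp add: algebra_simps)
    then have s01: "ss u < 1" using fib.kp_neg_iff[OF F, of 1] unfolding ss_def by simp
    have s: "0 < tm / gnorm p u" using tm0 Gpos[OF uS] by simp
    have "h (tm / gnorm p u * gnorm p u) \<le> Ph u (tm / gnorm p u)"
      using Phi_ge_h[OF uS, of "tm / gnorm p u"] s by simp
    also have "\<dots> \<le> max 0 (Ph u 1)"
      using fib.L_minus[OF F _ _ s] kM s01 unfolding Ph_def kk_def ss_def by simp
    finally have "h tm \<le> max 0 (E u)" using Gpos[OF uS] Eu by simp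
    then show ?thesis using htm by simp
  qed
  have s1_ex: "\<exists>w\<in>P_plus TYPE('n) p q a \<mu>. (gnorm p v \<le> r0 \<longrightarrow> E w \<le> E v)" if vS: "v \<in> Sa'" for v
  proof -
    note F = fibu[OF vS]
    have s: "0 \<le> tm / gnorm p v" using tm0 Gpos[OF vS] by simp
    have "h (tm / gnorm p v * gnorm p v) \<le> Ph v (tm / gnorm p v)"
      using Phi_ge_h[OF vS, of "tm / gnorm p v"] s by simp
    then have Ph_pos: "0 < Ph v (tm / gnorm p v)" using htm Gpos[OF vS] by simp
    obtain s1 where s1: "0 < s1" "s1 < ss v" "kk v s1 = \<mu> * g * GB v"
      using fib.L_s1[OF F _ s Ph_pos[unfolded Ph_def]] mu0 g0 GBpos[OF vS] unfolding kk_def ss_def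
      by auto
    obtain w where w: "w \<in> Sa'" "E w = Ph v s1" "Po w = s1 powr (q * g) * (kk v s1 - \<mu> * g * GB v)"
      "Se w = p * GA v * s1 powr p - q * g * (\<mu> * g * GB v) * s1 powr (q * g) - ps * GD v * s1 powr ps"
      using dil[OF vS s1(1)] by blast
    have Pw: "Po w = 0" using w(3) s1(3) by simp
    have "(ps - q * g) * GD v * s1 powr (ps - p) < (p - q * g) * GA v"
      using fib.kp_pos_iff[OF F s1(1)] s1(2) unfolding ss_def by simp
    then have Sw: "0 < Se w" using Se_at[OF w(4) s1(3) s1(1)] s1(1) by simp
    have wP: "w \<in> P_plus TYPE('n) p q a \<mu>"
      using w(1) Pw Sw unfolding P_plus_def Sa'_def Po_def Se_def by simp
    have "E w \<le> E v" if le: "gnorm p v \<le> r0"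
    proof -
      have Ew: "Ph v s1 < 0" using Pp_prop[OF wP] w(2) by simp
      have rho: "1 \<le> r0 / gnorm p v" using le Gpos[OF vS] by simp
      have "h (r0 / gnorm p v * gnorm p v) \<le> Ph v (r0 / gnorm p v)"
        using Phi_ge_h[OF vS, of "r0 / gnorm p v"] rho by simp
      then have "0 \<le> Ph v (r0 / gnorm p v)" using hR0 Gpos[OF vS] by simp
      then have "Ph v s1 \<le> Ph v 1"
        using fib.L_III[OF F _ s1(1) _ rho] s1 Ew unfolding Ph_def kk_def ss_def by simp
      then show ?thesis using w(2) Eu by simp
    qed
    then show ?thesis using wP by blast
  qed
  have s2_ex: "\<exists>w. w \<in> P_minus TYPE('n) p q a \<mu>" if vS: "v \<in> Sa'" for v
  proof -
    note F = fibu[OF vS]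
    have s: "0 \<le> tm / gnorm p v" using tm0 Gpos[OF vS] by simp
    have "h (tm / gnorm p v * gnorm p v) \<le> Ph v (tm / gnorm p v)"
      using Phi_ge_h[OF vS, of "tm / gnorm p v"] s by simp
    then have Ph_pos: "0 < Ph v (tm / gnorm p v)" using htm Gpos[OF vS] by simp
    obtain s2 where s2: "ss v < s2" "kk v s2 = \<mu> * g * GB v"
      using fib.L_s2[OF F _ s Ph_pos[unfolded Ph_def]] mu0 g0 GBpos[OF vS] unfolding kk_def ss_def
      by auto
    have s20: "0 < s2" using s2 fib.s0_pos[OF F] unfolding ss_def by simp
    obtain w where w: "w \<in> Sa'" "Po w = s2 powr (q * g) * (kk v s2 - \<mu> * g * GB v)"
      "Se w = p * GA v * s2 powr p - q * g * (\<mu> * g * GB v) * s2 powr (q * g) - ps * GD v * s2 powr ps"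
      using dil[OF vS s20] by blast
    have Pw: "Po w = 0" using w(2) s2(2) by simp
    have "(p - q * g) * GA v < (ps - q * g) * GD v * s2 powr (ps - p)"
      using fib.kp_neg_iff[OF F s20] s2(1) unfolding ss_def by simp
    then have Sw: "Se w < 0" using Se_at[OF w(3) s2(2) s20] s20 by (simp add: mult_pos_neg)
    show ?thesis
      using w(1) Pw Sw unfolding P_minus_def Sa'_def Po_def Se_def by auto
  qed
  define Pp where "Pp = P_plus TYPE('n) p q a \<mu>"
  define Pm where "Pm = P_minus TYPE('n) p q a \<mu>"
  define AR where "AR = A_R TYPE('n) p a r0"
  obtain v0 where v0: "v0 \<in> Sa'" using F5 unfolding Sa'_def by blast
  have Pp_ne: "Pp \<noteq> {}" using s1_ex[OF v0] unfolding Pp_def by blast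
  have Pm_ne: "Pm \<noteq> {}" using s2_ex[OF v0] unfolding Pm_def by blast
  have PpAR: "Pp \<subseteq> AR" using Pp_prop unfolding Pp_def AR_def A_R_def Sa'_def by force
  have lb: "- (K * r0 powr (q * g) + L * r0 powr ps) \<le> E v" if v: "v \<in> AR" for v
  proof -
    have vS: "v \<in> Sa'" and le: "gnorm p v \<le> r0" using v unfolding AR_def A_R_def Sa'_def by auto
    let ?t = "gnorm p v"
    have "h ?t \<le> E v" using Phi_ge_h[OF vS, of 1] Eu by simp
    moreover have "?t powr (q * g) \<le> r0 powr (q * g)" "?t powr ps \<le> r0 powr ps"
      using le Gpos[OF vS] qg0 pps p0 by (auto intro!: powr_mono2)
    moreover have "0 \<le> 1 / p * ?t powr p" using p0 by simp
    ultimately show ?thesis unfolding h_eq using K0 L0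
      by (smt (verit, best) mult_left_mono)
  qed
  have bddAR: "bdd_below (E ` AR)" using lb by (intro bdd_belowI2) auto
  have bddPp: "bdd_below (E ` Pp)" using lb PpAR by (intro bdd_belowI2) auto
  have AR_ne: "AR \<noteq> {}" using Pp_ne PpAR by blast
  have eq: "Inf (E ` Pp) = Inf (E ` AR)"
  proof (rule antisym)
    show "Inf (E ` Pp) \<le> Inf (E ` AR)"
    proof (rule cInf_greatest)
      show "E ` AR \<noteq> {}" using AR_ne by simp
      fix x assume "x \<in> E ` AR"
      then obtain v where v: "v \<in> AR" "x = E v" by blast
      have vS: "v \<in> Sa'" and le: "gnorm p v \<le> r0" using v unfolding AR_def A_R_def Sa'_def by auto
      obtain w where w: "w \<in> Pp" "E w \<le> E v" using s1_ex[OF vS] le unfolding Pp_def by blast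
      have "Inf (E ` Pp) \<le> E w" using w bddPp by (intro cInf_lower) auto
      then show "Inf (E ` Pp) \<le> x" using w v by simp
    qed
    show "Inf (E ` AR) \<le> Inf (E ` Pp)"
      using Pp_ne bddAR PpAR by (intro cInf_superset_mono) auto
  qed
  have neg: "Inf (E ` Pp) < 0"
  proof -
    obtain u where u: "u \<in> Pp" using Pp_ne by blast
    have "Inf (E ` Pp) \<le> E u" using u bddPp by (intro cInf_lower) auto
    also have "E u < 0" using Pp_prop u unfolding Pp_def by blast
    finally show ?thesis .
  qed
  have pos: "h tm \<le> Inf (E ` Pm)"
    using Pm_ne Pm_prop unfolding Pm_def by (intro cInf_greatest) auto
  show ?thesis
    unfolding m_plus_def m_minus_def R0_eq E_def[symmetric] Pp_def[symmetric] Pm_def[symmetric]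
      AR_def[symmetric]
    using eq neg pos htm by simp
qed


lemma W1p_cmult:
  fixes u :: "real^'n::finite \<Rightarrow> real"
  assumes W: "W1p p u" and p: "0 < p"
  shows "W1p p (\<lambda>x. c * u x)"
proof -
  note gp = grad_props[OF W]
  let ?g = "grad p u"
  have um: "u \<in> borel_measurable lborel" and ui: "integrable lborel (\<lambda>x. \<bar>u x\<bar> powr p)"
    using W unfolding W1p_def in_Lp_def by auto
  have "in_Lp p (\<lambda>x. c * u x)" unfolding in_Lp_def
  proof
    show "(\<lambda>x. c * u x) \<in> borel_measurable lborel" using um by simp
    have "(\<lambda>x. \<bar>c * u x\<bar> powr p) = (\<lambda>x. \<bar>c\<bar> powr p * \<bar>u x\<bar> powr p)"
      by (simp add: abs_mult powr_mult)
    then show "integrable lborel (\<lambda>x. \<bar>c * u x\<bar> powr p)" using ui by simp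
  qed
  moreover have "weak_gradient (\<lambda>x. c * u x) (\<lambda>x. c *\<^sub>R ?g x)"
    using gp(1) unfolding weak_gradient_def by (auto simp: mult.assoc)
  moreover have "(\<lambda>x. c *\<^sub>R ?g x) \<in> borel_measurable lborel" using gp(2) by simp
  moreover have "integrable lborel (\<lambda>x. norm (c *\<^sub>R ?g x) powr p)"
  proof -
    have "(\<lambda>x. norm (c *\<^sub>R ?g x) powr p) = (\<lambda>x. \<bar>c\<bar> powr p * norm (?g x) powr p)"
      by (simp add: powr_mult)
    then show ?thesis using gp(3) by simp
  qed
  ultimately show ?thesis unfolding W1p_def by blast
qed

lemma Lnorm_nonneg: "0 \<le> Lnorm r u" unfolding Lnorm_def by simp
lemma gnorm_nonneg: "0 \<le> gnorm p u" unfolding gnorm_def by simp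


lemma exps2:
  fixes p q N :: real
  assumes "2 \<le> N" "1 < p" "p < N" "p < q" "q < p + p\<^sup>2 / N"
  shows "q < N * p / (N - p)"
proof -
  have "q - p < p\<^sup>2 / N" using assms by simp
  also have "p\<^sup>2 / N < p\<^sup>2 / (N - p)" using assms by (intro divide_strict_left_mono) auto
  also have "p\<^sup>2 / (N - p) = N * p / (N - p) - p" using assms by (simp add: field_simps power2_eq_square)
  finally show ?thesis by simp
qed

theorem lemma4p4:
  fixes p q a \<mu> :: real
  assumes "CARD('n::finite) \<ge> 2"
    and "1 < p" and "p < real CARD('n)"
    and "p < q" and "q < p + p\<^sup>2 / real CARD('n)"
    and "a > 0" and "\<mu> > 0"
    and "\<mu> * a powr (q * (1 - gamma_q CARD('n) p q)) < alpha_const TYPE('n) p q"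
  shows "m_plus TYPE('n) p q a \<mu> =
           Inf (energy TYPE('n) p q \<mu> ` A_R TYPE('n) p a (R0 TYPE('n) p q a \<mu>))
         \<and> m_plus TYPE('n) p q a \<mu> < 0 \<and> 0 < m_minus TYPE('n) p q a \<mu>"
proof -
  note N2 = assms(1) and p1 = assms(2) and pN = assms(3) and pq = assms(4) and qlt = assms(5)
    and a0 = assms(6) and mu0 = assms(7) and hyp = assms(8)
  define N where "N = real CARD('n)"
  define ps where "ps = crit_exp CARD('n) p"
  define g where "g = gamma_q CARD('n) p q"
  define S where "S = sobolev_const TYPE('n) p"
  define C where "C = GN_const TYPE('n) p q"
  have N2': "2 \<le> N" using N2 unfolding N_def by simp
  have ps_eq: "ps = N * p / (N - p)" unfolding ps_def crit_exp_def N_def ..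
  have g_eq: "g = N * (q - p) / (p * q)" unfolding g_def gamma_q_def N_def ..
  have qg0: "0 < q * g" and qgp: "q * g < p" and pps: "p < ps" and g0: "0 < g"
    using exps[OF N2' p1 pN[folded N_def] pq qlt[folded N_def]] unfolding ps_eq g_eq by auto
  have qps: "q < ps" using exps2[OF N2' p1 pN[folded N_def] pq qlt[folded N_def]] unfolding ps_eq .
  have p0: "0 < p" using p1 by simp
  have q0: "0 < q" using p1 pq by simp
  have Np: "p < N" using pN unfolding N_def .
  define lam where "lam = (ps - q) / (ps - p)"
  have l01: "0 < lam" "lam < 1" unfolding lam_def using pq qps pps by (auto simp: field_simps)
  have ex1: "p * lam = q * (1 - g)"
    unfolding lam_def ps_eq g_eq using p0 q0 Np N2' by (simp add: field_simps)
  have ex2: "ps * (1 - lam) = q * g"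
  proof -
    have Nnz: "N - p \<noteq> 0" using Np by simp
    have d: "ps - p = p * p / (N - p)" unfolding ps_eq using Nnz by (simp add: field_simps)
    have l1: "1 - lam = (q - p) / (ps - p)" unfolding lam_def using pps by (simp add: field_simps)
    have "ps * (1 - lam) = ps * (q - p) / (ps - p)" unfolding l1 by simp
    also have "\<dots> = ps * (q - p) / (p * p / (N - p))" by (simp only: d)
    also have "\<dots> = (N * p / (N - p)) * (q - p) / (p * p / (N - p))" unfolding ps_eq ..
    also have "\<dots> = N * (q - p) / p" using Nnz p0 by (simp add: field_simps)
    also have "\<dots> = q * g" unfolding g_eq using q0 p0 by (simp add: field_simps)
    finally show ?thesis .
  qed
  have ex3: "p * lam + ps * (1 - lam) = q"
  proof -
    have nz: "ps - p \<noteq> 0" using pps by simp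
    have l1: "1 - lam = (q - p) / (ps - p)" unfolding lam_def using pps by (simp add: field_simps)
    have "p * lam + ps * (1 - lam) = p * (ps - q) / (ps - p) + ps * (q - p) / (ps - p)"
      unfolding l1 unfolding lam_def by simp
    also have "\<dots> = (p * (ps - q) + ps * (q - p)) / (ps - p)" by (simp add: add_divide_distrib)
    also have "p * (ps - q) + ps * (q - p) = q * (ps - p)" by (simp add: algebra_simps)
    finally show ?thesis using nz by simp
  qed
  define SS where "SS = {gnorm p u powr p / Lnorm ps u powr p | u :: real^'n \<Rightarrow> real. W1p p u \<and> \<not> (AE x in lborel. u x = 0)}"
  have S_eq: "S = Inf SS" unfolding S_def SS_def sobolev_const_def ps_def ..
  have bW: "W1p p (bump :: real^'n \<Rightarrow> real)" using test_W1p(1)[OF bump_test p0] .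
  have SS_ne: "SS \<noteq> {}" unfolding SS_def using bW bump_nz by blast
  have SS_bdd: "bdd_below SS" unfolding SS_def by (intro bdd_belowI[of _ 0]) auto
  have S0: "0 \<le> S" unfolding S_eq using SS_ne by (intro cInf_greatest) (auto simp: SS_def)
  have Sle: "S \<le> gnorm p u powr p / Lnorm ps u powr p" if "W1p p u" "\<not> (AE x in lborel. u x = 0)" for u :: "real^'n \<Rightarrow> real"
  proof -
    have "gnorm p u powr p / Lnorm ps u powr p \<in> SS" unfolding SS_def using that by blast
    then show ?thesis unfolding S_eq using SS_bdd by (rule cInf_lower)
  qed
  \<comment> \<open>positivity of S and C from the smallness hypothesis\<close>
  define X where "X = ps * S powr (ps / p) * (p - q * g) / (p * (ps - q * g))"
  define C1 where "C1 = X powr ((p - q * g) / (ps - p)) * (q * (ps - p)) / (p * C * (ps - q * g))"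
  have "alpha_const TYPE('n) p q \<le> C1"
    unfolding alpha_const_def Let_def C1_def X_def ps_def g_def S_def C_def by simp
  moreover have "0 < \<mu> * a powr (q * (1 - g))" using mu0 a0 by simp
  ultimately have C1pos: "0 < C1" using hyp unfolding g_def by simp
  have Spos: "0 < S"
  proof (rule ccontr)
    assume "\<not> 0 < S"
    then have "S = 0" using S0 by simp
    then have "C1 = 0" unfolding C1_def X_def using pps p0 by simp
    then show False using C1pos by simp
  qed
  have Cpos: "0 < C"
  proof (rule ccontr)
    assume "\<not> 0 < C"
    then have "p * C * (ps - q * g) \<le> 0" using p0 pps qgp by (simp add: mult_nonpos_nonneg mult_nonneg_nonpos)
    moreover have "0 \<le> X powr ((p - q * g) / (ps - p)) * (q * (ps - p))" using q0 pps by simp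
    ultimately have "C1 \<le> 0" unfolding C1_def by (simp add: divide_nonneg_nonpos)
    then show False using C1pos by simp
  qed
  have sob: "0 < Lnorm ps u \<and> 0 < gnorm p u \<and> integrable lborel (\<lambda>x. \<bar>u x\<bar> powr ps)
      \<and> S * Lnorm ps u powr p \<le> gnorm p u powr p
      \<and> Lnorm ps u powr ps \<le> gnorm p u powr ps / S powr (ps / p)"
    if W: "W1p p u" and nz: "\<not> (AE x in lborel. u x = 0)" for u :: "real^'n \<Rightarrow> real"
  proof -
    have L0: "0 < Lnorm ps u"
    proof (rule ccontr)
      assume "\<not> 0 < Lnorm ps u"
      then have "Lnorm ps u = 0" using Lnorm_nonneg[of ps u] by simp
      then have "S \<le> 0" using Sle[OF W nz] by simp
      then show False using Spos by simp
    qed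
    have SL: "S * Lnorm ps u powr p \<le> gnorm p u powr p"
      using Sle[OF W nz] L0 by (simp add: le_divide_eq)
    have G0: "0 < gnorm p u"
    proof -
      have "0 < S * Lnorm ps u powr p" using Spos L0 by simp
      then have pos: "0 < gnorm p u powr p" using SL by linarith
      show ?thesis
      proof (rule ccontr)
        assume "\<not> 0 < gnorm p u"
        then have "gnorm p u = 0" using gnorm_nonneg[of p u] by simp
        then show False using pos by simp
      qed
    qed
    have int: "integrable lborel (\<lambda>x. \<bar>u x\<bar> powr ps)"
    proof (rule ccontr)
      assume "\<not> integrable lborel (\<lambda>x. \<bar>u x\<bar> powr ps)"
      then have "(\<integral>x. \<bar>u x\<bar> powr ps \<partial>lborel) = 0" by (rule not_integrable_integral_eq)
      then have "Lnorm ps u = 0" unfolding Lnorm_def by simp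
      then show False using L0 by simp
    qed
    have "Lnorm ps u powr p \<le> gnorm p u powr p / S" using SL Spos by (simp add: le_divide_eq mult.commute)
    then have "(Lnorm ps u powr p) powr (ps / p) \<le> (gnorm p u powr p / S) powr (ps / p)"
      using pps p0 by (intro powr_mono2) auto
    then have "Lnorm ps u powr ps \<le> gnorm p u powr ps / S powr (ps / p)"
      using p0 Spos by (simp add: powr_powr powr_divide)
    then show ?thesis using L0 G0 int SL by simp
  qed
  have interp: "integrable lborel (\<lambda>x. \<bar>u x\<bar> powr q) \<and>
      (\<integral>x. \<bar>u x\<bar> powr q \<partial>lborel) \<le> (\<integral>x. \<bar>u x\<bar> powr p \<partial>lborel) powr lam * (\<integral>x. \<bar>u x\<bar> powr ps \<partial>lborel) powr (1 - lam)"
    if W: "W1p p u" and nz: "\<not> (AE x in lborel. u x = 0)" for u :: "real^'n \<Rightarrow> real"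
  proof -
    have um[measurable]: "u \<in> borel_measurable borel" and ui: "integrable lborel (\<lambda>x. \<bar>u x\<bar> powr p)"
      using W unfolding W1p_def in_Lp_def by auto
    have eq: "\<bar>u x\<bar> powr q = (\<bar>u x\<bar> powr p) powr lam * (\<bar>u x\<bar> powr ps) powr (1 - lam)" for x
      by (simp add: powr_powr powr_add[symmetric] ex3)
    have "integrable lborel (\<lambda>x. (\<bar>u x\<bar> powr p) powr lam * (\<bar>u x\<bar> powr ps) powr (1 - lam))"
      "(\<integral>x. (\<bar>u x\<bar> powr p) powr lam * (\<bar>u x\<bar> powr ps) powr (1 - lam) \<partial>lborel)
        \<le> (\<integral>x. \<bar>u x\<bar> powr p \<partial>lborel) powr lam * (\<integral>x. \<bar>u x\<bar> powr ps \<partial>lborel) powr (1 - lam)"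
      using holder2[of "\<lambda>x. \<bar>u x\<bar> powr p" lborel "\<lambda>x. \<bar>u x\<bar> powr ps" lam] ui sob[OF W nz] l01 by auto
    then show ?thesis unfolding eq by simp
  qed

  have Lp_pos: "0 < (\<integral>x. \<bar>u x\<bar> powr p \<partial>lborel) \<and> 0 < Lnorm p u"
    if W: "W1p p u" and nz: "\<not> (AE x in lborel. u x = 0)" for u :: "real^'n \<Rightarrow> real"
  proof -
    have ui: "integrable lborel (\<lambda>x. \<bar>u x\<bar> powr p)" using W unfolding W1p_def in_Lp_def by auto
    have "(\<integral>x. \<bar>u x\<bar> powr p \<partial>lborel) \<noteq> 0" using Lp_pos_iff[OF ui] nz by simp
    moreover have "0 \<le> (\<integral>x. \<bar>u x\<bar> powr p \<partial>lborel)" by (simp add: integral_nonneg)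
    ultimately have "0 < (\<integral>x. \<bar>u x\<bar> powr p \<partial>lborel)" by linarith
    then show ?thesis unfolding Lnorm_def by simp
  qed
  define Cb where "Cb = 1 / S powr (ps / p * (1 - lam))"
  have GNb: "Lnorm q u powr q \<le> Cb * (gnorm p u powr (q * g) * Lnorm p u powr (q * (1 - g)))"
    if W: "W1p p u" and nz: "\<not> (AE x in lborel. u x = 0)" for u :: "real^'n \<Rightarrow> real"
  proof -
    note sb = sob[OF W nz] and ip = interp[OF W nz]
    have "Lnorm q u powr q = (\<integral>x. \<bar>u x\<bar> powr q \<partial>lborel)" by (rule Lnorm_powr[OF q0])
    also have "\<dots> \<le> (\<integral>x. \<bar>u x\<bar> powr p \<partial>lborel) powr lam * (\<integral>x. \<bar>u x\<bar> powr ps \<partial>lborel) powr (1 - lam)"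
      using ip by simp
    also have "(\<integral>x. \<bar>u x\<bar> powr p \<partial>lborel) = Lnorm p u powr p" by (rule Lnorm_powr[OF p0, symmetric])
    also have "(\<integral>x. \<bar>u x\<bar> powr ps \<partial>lborel) = Lnorm ps u powr ps" using pps p0 by (intro Lnorm_powr[symmetric]) simp
    also have "(Lnorm p u powr p) powr lam = Lnorm p u powr (q * (1 - g))"
      by (simp add: powr_powr ex1)
    finally have A: "Lnorm q u powr q \<le> Lnorm p u powr (q * (1 - g)) * (Lnorm ps u powr ps) powr (1 - lam)" .
    have "(Lnorm ps u powr ps) powr (1 - lam) \<le> (gnorm p u powr ps / S powr (ps / p)) powr (1 - lam)"
      using sb l01 by (intro powr_mono2) auto
    also have "(gnorm p u powr ps / S powr (ps / p)) powr (1 - lam) = gnorm p u powr (q * g) * Cb"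
    proof -
      have "(gnorm p u powr ps / S powr (ps / p)) powr (1 - lam) = gnorm p u powr (ps * (1 - lam)) / S powr (ps / p * (1 - lam))"
        using Spos sb by (simp add: powr_divide powr_powr)
      then show ?thesis unfolding Cb_def ex2 by simp
    qed
    finally have B: "(Lnorm ps u powr ps) powr (1 - lam) \<le> gnorm p u powr (q * g) * Cb" .
    have "Lnorm p u powr (q * (1 - g)) * (Lnorm ps u powr ps) powr (1 - lam) \<le> Lnorm p u powr (q * (1 - g)) * (gnorm p u powr (q * g) * Cb)"
      using B by (intro mult_left_mono) auto
    with A show ?thesis by (simp add: algebra_simps)
  qed
  define GS where "GS = {Lnorm q u powr q / (gnorm p u powr (q * g) * Lnorm p u powr (q * (1 - g))) | u :: real^'n \<Rightarrow> real. W1p p u \<and> \<not> (AE x in lborel. u x = 0)}"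
  have C_eq: "C = Sup GS" unfolding C_def GS_def GN_const_def g_def ..
  have den_pos: "0 < gnorm p u powr (q * g) * Lnorm p u powr (q * (1 - g))"
    if W: "W1p p u" and nz: "\<not> (AE x in lborel. u x = 0)" for u :: "real^'n \<Rightarrow> real"
    using sob[OF W nz] Lp_pos[OF W nz] by simp
  have GS_bdd: "bdd_above GS"
  proof (rule bdd_aboveI[of _ Cb])
    fix x assume "x \<in> GS"
    then obtain u :: "real^'n \<Rightarrow> real" where u: "W1p p u" "\<not> (AE x in lborel. u x = 0)"
      and x: "x = Lnorm q u powr q / (gnorm p u powr (q * g) * Lnorm p u powr (q * (1 - g)))"
      unfolding GS_def by blast
    show "x \<le> Cb" unfolding x using GNb[OF u] den_pos[OF u] by (simp add: divide_le_eq)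
  qed
  have GN: "Lnorm q u powr q \<le> C * (gnorm p u powr (q * g) * Lnorm p u powr (q * (1 - g)))"
    if W: "W1p p u" and nz: "\<not> (AE x in lborel. u x = 0)" for u :: "real^'n \<Rightarrow> real"
  proof -
    have "Lnorm q u powr q / (gnorm p u powr (q * g) * Lnorm p u powr (q * (1 - g))) \<in> GS"
      unfolding GS_def using W nz by blast
    then have "Lnorm q u powr q / (gnorm p u powr (q * g) * Lnorm p u powr (q * (1 - g))) \<le> C"
      unfolding C_eq using GS_bdd by (rule cSup_upper)
    then show ?thesis using den_pos[OF W nz] by (simp add: divide_le_eq)
  qed

  have Sa_props: "W1p p u \<and> \<not> (AE x in lborel. u x = 0) \<and> Lnorm p u = a"
    if u: "u \<in> Sa TYPE('n) p a" for u :: "real^'n \<Rightarrow> real"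
  proof -
    have W: "W1p p u" and L: "Lnorm p u powr p = a powr p" using u unfolding Sa_def by auto
    have ui: "integrable lborel (\<lambda>x. \<bar>u x\<bar> powr p)" using W unfolding W1p_def in_Lp_def by auto
    have "(\<integral>x. \<bar>u x\<bar> powr p \<partial>lborel) = a powr p" using L Lnorm_powr[OF p0, of u] by simp
    then have "(\<integral>x. \<bar>u x\<bar> powr p \<partial>lborel) \<noteq> 0" using a0 by simp
    then have nz: "\<not> (AE x in lborel. u x = 0)" using Lp_pos_iff[OF ui] by simp
    have "Lnorm p u = (Lnorm p u powr p) powr (1 / p)" using p0 Lnorm_nonneg[of p u] by (simp add: powr_powr)
    also have "\<dots> = a" unfolding L using p0 a0 by (simp add: powr_powr)
    finally show ?thesis using W nz by simp
  qed
  have F1: "0 < gnorm p u \<and> 0 < Lnorm ps u powr ps \<and> 0 < Lnorm q u powr q"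
    if u: "u \<in> Sa TYPE('n) p a" for u :: "real^'n \<Rightarrow> real"
  proof -
    have W: "W1p p u" and nz: "\<not> (AE x in lborel. u x = 0)" using Sa_props[OF u] by auto
    note sb = sob[OF W nz]
    have qi: "integrable lborel (\<lambda>x. \<bar>u x\<bar> powr q)" using interp[OF W nz] by simp
    have "(\<integral>x. \<bar>u x\<bar> powr q \<partial>lborel) \<noteq> 0" using Lp_pos_iff[OF qi] nz by simp
    moreover have "0 \<le> (\<integral>x. \<bar>u x\<bar> powr q \<partial>lborel)" by (simp add: integral_nonneg)
    ultimately have "0 < (\<integral>x. \<bar>u x\<bar> powr q \<partial>lborel)" by linarith
    then have "0 < Lnorm q u powr q" using Lnorm_powr[OF q0, of u] by simp
    then show ?thesis using sb by simp
  qed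
  have F2: "Lnorm q u powr q \<le> C * gnorm p u powr (q * g) * a powr (q * (1 - g))"
    if u: "u \<in> Sa TYPE('n) p a" for u :: "real^'n \<Rightarrow> real"
    using GN[of u] Sa_props[OF u] by (simp add: mult.assoc)
  have F3: "Lnorm ps u powr ps \<le> gnorm p u powr ps / S powr (ps / p)"
    if u: "u \<in> Sa TYPE('n) p a" for u :: "real^'n \<Rightarrow> real"
    using sob[of u] Sa_props[OF u] by simp
  have F4: "\<exists>v\<in>Sa TYPE('n) p a. gnorm p v = s * gnorm p u
       \<and> Lnorm q v powr q = s powr (q * g) * Lnorm q u powr q \<and> Lnorm ps v powr ps = s powr ps * Lnorm ps u powr ps"
    if u: "u \<in> Sa TYPE('n) p a" and s: "0 < s" for u :: "real^'n \<Rightarrow> real" and s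
  proof -
    have W: "W1p p u" using Sa_props[OF u] by simp
    define v where "v = (\<lambda>x. s powr (real CARD('n) / p) * u (s *\<^sub>R x))"
    note D = dil_W1p[OF _ s W, folded v_def]
    have p1': "1 \<le> p" using p1 by simp
    have "Lnorm p v powr p = s powr (real CARD('n) * (p - p) / p) * Lnorm p u powr p"
      using D(3)[OF p1' p0] .
    then have "Lnorm p v powr p = a powr p" using u s unfolding Sa_def by simp
    then have vS: "v \<in> Sa TYPE('n) p a" using D(1)[OF p1'] unfolding Sa_def by simp
    have "Lnorm q v powr q = s powr (real CARD('n) * (q - p) / p) * Lnorm q u powr q"
      using D(3)[OF p1' q0] .
    moreover have "real CARD('n) * (q - p) / p = q * g" unfolding g_eq N_def using p0 q0 by (simp add: field_simps)
    moreover have "Lnorm ps v powr ps = s powr (real CARD('n) * (ps - p) / p) * Lnorm ps u powr ps"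
      using D(3)[OF p1'] pps p0 by simp
    moreover have "real CARD('n) * (ps - p) / p = ps"
    proof -
      have Nnz: "N - p \<noteq> 0" using Np by simp
      show ?thesis unfolding ps_eq N_def[symmetric] using Nnz p0 by (simp add: field_simps)
    qed
    ultimately show ?thesis using vS D(2)[OF p1'] by (intro bexI[of _ v]) auto
  qed
  have F5: "Sa TYPE('n) p a \<noteq> {}"
  proof -
    define B where "B = (\<integral>x. \<bar>(bump :: real^'n \<Rightarrow> real) x\<bar> powr p \<partial>lborel)"
    have B0: "0 < B" unfolding B_def using Lp_pos[OF bW bump_nz] by simp
    define c where "c = a / B powr (1 / p)"
    have c0: "0 < c" unfolding c_def using a0 B0 by simp
    have W: "W1p p (\<lambda>x. c * (bump :: real^'n \<Rightarrow> real) x)" by (rule W1p_cmult[OF bW p0])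
    have "Lnorm p (\<lambda>x. c * (bump :: real^'n \<Rightarrow> real) x) powr p = (\<integral>x. \<bar>c * (bump :: real^'n \<Rightarrow> real) x\<bar> powr p \<partial>lborel)"
      using Lnorm_powr[OF p0, of "\<lambda>x. c * (bump :: real^'n \<Rightarrow> real) x"] by simp
    also have "\<dots> = (\<integral>x. c powr p * \<bar>(bump :: real^'n \<Rightarrow> real) x\<bar> powr p \<partial>lborel)"
      using c0 by (simp add: abs_mult powr_mult)
    also have "\<dots> = c powr p * B" unfolding B_def by simp
    also have "\<dots> = a powr p" unfolding c_def using a0 B0 p0 by (simp add: powr_divide powr_powr)
    finally show ?thesis using W unfolding Sa_def by blast
  qed
  show ?thesis
    by (rule main_abstract[OF N2 p1 pN pq qlt a0 mu0 hyp ps_def g_def S_def C_def Spos Cpos F1 F2 F3 F4 F5])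
qed


end
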